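(* For every $n\ge0$ and every $\sigma\in\mathfrak S_n$, with $\Phi$ and $\mathrm F_3$ the bijections of $\mathfrak S_n$ defined below, $$(\mathrm{fix},\mathrm{DEZ},\mathrm{exc})\,\sigma=(\mathrm{fix},\mathrm{DES},\mathrm{exc})\,\Phi(\sigma),\qquad (\mathrm{fix},\mathrm{dez},\mathrm{maz},\mathrm{exc})\,\sigma=(\mathrm{fix},\mathrm{des},\mathrm{maj},\mathrm{exc})\,\Phi(\sigma),$$ $$(\mathrm{fix},\mathrm{maz},\mathrm{exc})\,\sigma=(\mathrm{fix},\mathrm{maf},\mathrm{exc})\,\mathrm F_3(\sigma).$$
   Context: Words have nonnegative integer letters. For $w=x_1\cdots x_n$: $\mathrm{DES}\,w=\{i:1\le i\le n-1,\ x_i>x_{i+1}\}$, $\mathrm{des}\,w=\#\mathrm{DES}\,w$, $\mathrm{maj}\,w=\sum_{i\in\mathrm{DES}\,w}i$; $\mathrm{Zero}\,w=\{i:x_i=0\}$, $\mathrm{zero}\,w=\#\mathrm{Zero}\,w$; $\mathrm{Pos}\,w$ is the subword of positive letters; $\mathrm{mafz}\,w=\sum_{i\in\mathrm{Zero}\,w}i-\sum_{i=1}^{\mathrm{zero}\,w}i+\mathrm{maj}\,\mathrm{Pos}\,w$. Permutations are words $\sigma(1)\cdots\sigma(n)$, with $\mathrm{DES},\mathrm{des},\mathrm{maj}$ as for words; $\mathrm{fix}\,\sigma$ is the number of fixed points; $\mathrm{exc}\,\sigma=\#\{i:\sigma(i)>i\}$. $\mathrm{ZDer}$: for $\sigma\in\mathfrak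 S_n$ let $j_1<\cdots<j_m$ be its non-fixed points and $\mathrm{red}$ the increasing bijection of $\{j_1,\dots,j_m\}$ onto $\{1,\dots,m\}$; $\mathrm{ZDer}(\sigma)=x_1\cdots x_n$ with $x_i=0$ if $\sigma(i)=i$ and $x_i=\mathrm{red}(\sigma(i))$ otherwise; it is a bijection of $\mathfrak S_n$ onto the set of words $w$ of length $n$ whose positive-letter subword is a derangement (permutation $y_1\cdots y_m$ of $1..m$ with $y_i\ne i$). $\mathrm{DEZ}\,\sigma=\mathrm{DES}\,\mathrm{ZDer}(\sigma)$, $\mathrm{dez}\,\sigma=\#\mathrm{DEZ}\,\sigma$, $\mathrm{maz}\,\sigma=\mathrm{maj}\,\mathrm{ZDer}(\sigma)$, $\mathrm{maf}\,\sigma=\mathrm{mafz}\,\mathrm{ZDer}(\sigma)$. $\Phi(\sigma)=\mathrm{ZDer}^{-1}({\bf\Phi}(\mathrm{ZDer}\,\sigma))$ and $\mathrm F_3(\sigma)=\mathrm{ZDer}^{-1}({\bf F}_3(\mathrm{ZDer}\,\sigma))$, where: ${\bf\Phi}$: for $w=x_1\cdots x_n$ with $n-m$ zeros and derangement positive subword, and a position $k$ with $x_k>0$, $\mathrm{red}(k)$ is the number of positive letters among $x_1,\dots,x_k$; $x_k$ is excedent if $x_k>\mathrm{red}(k)$, subexcedent if $x_k<\mathrm{red}(k)$; non-subexcedent means $0$ or excedent; $x_0=x_{n+1}=+\infty$ count as non-subexcedent. For $1\le l\le n$: if $l>n-m$, $\phi_l(w)=w$; otherwise let $j$ be the position of the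 $l$-th zero from the left. (a) $x_{j-1},x_{j+1}$ both non-subexcedent: $\phi_l(w)=w$. (b) $x_{j-1}$ non-subexcedent and $x_{j+1}$ subexcedent, or both subexcedent with $x_{j-1}>x_{j+1}$: with $k$ the greatest integer $\ge j+1$ such that $x_{j+1}<\cdots<x_k<\mathrm{red}(k)$, move the zero at position $j$ to just after $x_k$. (c) $x_{j-1}$ subexcedent and $x_{j+1}$ non-subexcedent, or both subexcedent with $x_{j-1}<x_{j+1}$: with $i$ the smallest integer $\le j-1$ such that $\mathrm{red}(i)>x_i>\cdots>x_{j-1}$, move the zero at position $j$ to just before $x_i$. ${\bf\Phi}=\phi_1\circ\cdots\circ\phi_n$. ${\bf F}_3$, by induction on length $n$: if $n\le1$ or all letters except the last are $0$, ${\bf F}_3(w)=w$. Otherwise write $w=w'a0^rb$ with $a\ge1$ the rightmost positive letter among the first $n-1$ letters, $r\ge0$, $b$ the last letter. (1) $a\le b$: ${\bf F}_3(w)={\bf F}_3(w'a0^r)b$. (2) $a>b$, $r\ge1$: writing ${\bf F}_3(w'a0^r)=w''c$ ($c$ a letter), ${\bf F}_3(w)=0w''b$. (3) $a>b$, $r=0$: writing ${\bf F}_3(w'a)=0^{m_1}x_1v_1\cdots0^{m_k}x_kv_k$ ($m_1\ge0$, $m_2,\dots,m_k\ge1$, $x_i$ positive letters, $v_i$ possibly empty words of positive letters), ${\bf F}_3(w)=x_10^{m_1}v_1\cdots x_k0^{m_k}v_k\,b$. *)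

theory Defs
  imports Main
begin

text \<open>Words are lists of natural numbers; positions are 1-based, so the letter
  x_i of w is w ! (i - 1).\<close>

definition DES :: "nat list \<Rightarrow> nat set" where
  "DES w = {i. 1 \<le> i \<and> i \<le> length w - 1 \<and> w ! (i - 1) > w ! i}"

definition des :: "nat list \<Rightarrow> nat" where
  "des w = card (DES w)"

definition maj :: "nat list \<Rightarrow> nat" where
  "maj w = \<Sum>(DES w)"

definition Zero_pos :: "nat list \<Rightarrow> nat set" where
  "Zero_pos w = {i. 1 \<le> i \<and> i \<le> length w \<and> w ! (i - 1) = 0}"

definition zero_cnt :: "nat list \<Rightarrow> nat" where
  "zero_cnt w = card (Zero_pos w)"

definition Pos :: "nat list \<Rightarrow> nat list" where
  "Pos w = filter (\<lambda>x. 0 < x) w"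

definition mafz :: "nat list \<Rightarrow> int" where
  "mafz w = int (\<Sum>(Zero_pos w)) - int (\<Sum>{1..zero_cnt w}) + int (maj (Pos w))"

definition perms :: "nat \<Rightarrow> nat list set" where
  "perms n = {s. length s = n \<and> distinct s \<and> set s = {1..n}}"

definition fixp :: "nat list \<Rightarrow> nat" where
  "fixp s = card {i. 1 \<le> i \<and> i \<le> length s \<and> s ! (i - 1) = i}"

definition exc :: "nat list \<Rightarrow> nat" where
  "exc s = card {i. 1 \<le> i \<and> i \<le> length s \<and> s ! (i - 1) > i}"

definition ZDer :: "nat list \<Rightarrow> nat list" where
  "ZDer s = (let NF = {i. 1 \<le> i \<and> i \<le> length s \<and> s ! (i - 1) \<noteq> i};
                 red = (\<lambda>j. card {k \<in> NF. k \<le> j})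
             in map (\<lambda>i. if s ! (i - 1) = i then 0 else red (s ! (i - 1))) [1..<length s + 1])"

definition DEZ :: "nat list \<Rightarrow> nat set" where
  "DEZ s = DES (ZDer s)"

definition dez :: "nat list \<Rightarrow> nat" where
  "dez s = card (DEZ s)"

definition maz :: "nat list \<Rightarrow> nat" where
  "maz s = maj (ZDer s)"

definition maf :: "nat list \<Rightarrow> int" where
  "maf s = mafz (ZDer s)"

definition ZDer_inv :: "nat list \<Rightarrow> nat list" where
  "ZDer_inv w = inv_into (perms (length w)) ZDer w"

definition redw :: "nat list \<Rightarrow> nat \<Rightarrow> nat" where
  "redw w k = length (filter (\<lambda>x. 0 < x) (take k w))"

text \<open>subexcedent position (positions 0 and n+1 carry +infinity: never subexcedent)\<close>
definition subexc :: "nat list \<Rightarrow> nat \<Rightarrow> bool" where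
  "subexc w k = (1 \<le> k \<and> k \<le> length w \<and> 0 < w ! (k - 1) \<and> w ! (k - 1) < redw w k)"

definition zeropos :: "nat list \<Rightarrow> nat list" where
  "zeropos w = filter (\<lambda>i. w ! (i - 1) = 0) [1..<length w + 1]"

definition phi_l :: "nat \<Rightarrow> nat list \<Rightarrow> nat list" where
  "phi_l l w =
    (if l < 1 \<or> l > length (zeropos w) then w
     else let j = zeropos w ! (l - 1);
              x = (\<lambda>t. w ! (t - 1)) in
       if (\<not> subexc w (j - 1) \<and> subexc w (j + 1)) \<or>
          (subexc w (j - 1) \<and> subexc w (j + 1) \<and> x (j - 1) > x (j + 1)) then
         (let k = GREATEST k. j + 1 \<le> k \<and> k \<le> length w \<and>
                     (\<forall>t. j + 1 \<le> t \<and> t < k \<longrightarrow> x t < x (t + 1)) \<and> x k < redw w k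
          in take (j - 1) w @ drop j (take k w) @ [0] @ drop k w)
       else if (subexc w (j - 1) \<and> \<not> subexc w (j + 1)) \<or>
          (subexc w (j - 1) \<and> subexc w (j + 1) \<and> x (j - 1) < x (j + 1)) then
         (let i = LEAST i. 1 \<le> i \<and> i \<le> j - 1 \<and> redw w i > x i \<and>
                     (\<forall>t. i \<le> t \<and> t < j - 1 \<longrightarrow> x t > x (t + 1))
          in take (i - 1) w @ [0] @ drop (i - 1) (take (j - 1) w) @ drop j w)
       else w)"

definition PhiW :: "nat list \<Rightarrow> nat list" where
  "PhiW w = foldr phi_l [1..<length w + 1] w"

definition Phi :: "nat list \<Rightarrow> nat list" where
  "Phi s = ZDer_inv (PhiW (ZDer s))"

text \<open>Rewrites 0^m1 x1 v1 ... 0^mk xk vk into x1 0^m1 v1 ... xk 0^mk vk.\<close>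
function swapblocks :: "nat list \<Rightarrow> nat list" where
  "swapblocks l =
    (let z = takeWhile (\<lambda>y. y = 0) l; rest = dropWhile (\<lambda>y. y = 0) l in
     if rest = [] then z
     else hd rest # z @ takeWhile (\<lambda>y. 0 < y) (tl rest)
            @ swapblocks (dropWhile (\<lambda>y. 0 < y) (tl rest)))"
  by pat_completeness auto
termination
proof (relation "measure length")
  fix l :: "nat list" and z rest
  assume "z = takeWhile (\<lambda>y. y = 0) l" "rest = dropWhile (\<lambda>y. y = 0) l" "rest \<noteq> []"
  then show "(dropWhile (\<lambda>y. 0 < y) (tl rest), l) \<in> measure length"
    using length_dropWhile_le[of "\<lambda>y. 0 < y" "tl rest"] length_dropWhile_le[of "\<lambda>y. y = 0" l]
  proof -
    have "length rest \<ge> 1" using \<open>rest \<noteq> []\<close> by (cases rest) auto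
    moreover have "length rest \<le> length l"
      using \<open>rest = _\<close> length_dropWhile_le by metis
    moreover have "length (dropWhile (\<lambda>y. 0 < y) (tl rest)) \<le> length rest - 1"
      using length_dropWhile_le[of "\<lambda>y. 0 < y" "tl rest"] by simp
    ultimately show ?thesis by simp
  qed
qed auto

function F3W :: "nat list \<Rightarrow> nat list" where
  "F3W w =
    (if length w \<le> 1 \<or> (\<forall>y\<in>set (butlast w). y = 0) then w
     else let u = butlast w; b = last w;
              a = last (filter (\<lambda>y. 0 < y) u);
              r = length (takeWhile (\<lambda>y. y = 0) (rev u)) in
       if a \<le> b then F3W u @ [b]
       else if 1 \<le> r then 0 # butlast (F3W u) @ [b]
       else swapblocks (F3W u) @ [b])"
  by pat_completeness auto
termination
  by (relation "measure length") auto

definition F3 :: "nat list \<Rightarrow> nat list" where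
  "F3 s = ZDer_inv (F3W (ZDer s))"

end

theory Submission
  imports Defs
begin

definition npos :: "nat list \<Rightarrow> nat" where "npos w = length (Pos w)"
definition nz :: "nat list \<Rightarrow> nat" where "nz w = length (filter (\<lambda>x. x = 0) w)"

lemma Pos_simps[simp]: "Pos [] = []" "Pos (x # w) = (if 0 < x then x # Pos w else Pos w)"
  "Pos (v @ w) = Pos v @ Pos w"
  by (auto simp: Pos_def)

lemma npos_simps[simp]: "npos [] = 0" "npos (x # w) = (if 0 < x then Suc (npos w) else npos w)"
  "npos (v @ w) = npos v + npos w"
  by (auto simp: npos_def)

lemma nz_simps[simp]: "nz [] = 0" "nz (x # w) = (if x = 0 then Suc (nz w) else nz w)"
  "nz (v @ w) = nz v + nz w"
  by (auto simp: nz_def)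

lemma npos_nz: "npos w + nz w = length w"
  by (induction w) auto

lemma npos_allpos: "\<forall>x\<in>set B. 0 < x \<Longrightarrow> npos B = length B"
  by (induction B) auto

lemma nz_allpos: "\<forall>x\<in>set B. 0 < x \<Longrightarrow> nz B = 0"
  by (induction B) auto

lemma Pos_allpos: "\<forall>x\<in>set B. 0 < x \<Longrightarrow> Pos B = B"
  by (induction B) auto

fun annp :: "nat \<Rightarrow> nat \<Rightarrow> nat list \<Rightarrow> (nat \<times> nat) list" where
  "annp p z [] = []"
| "annp p z (x # xs) = (if 0 < x then (x, Suc p) # annp (Suc p) z xs
                         else (0, Suc z) # annp p (Suc z) xs)"

definition ann :: "nat list \<Rightarrow> (nat \<times> nat) list" where "ann w = annp 0 0 w"

lemma length_annp[simp]: "length (annp p z w) = length w"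
  by (induction w arbitrary: p z) auto

lemma map_fst_annp[simp]: "map fst (annp p z w) = w"
  by (induction w arbitrary: p z) auto

lemma annp_append: "annp p z (v @ w) = annp p z v @ annp (p + npos v) (z + nz v) w"
  by (induction v arbitrary: p z) auto

lemma annp_allpos: "\<forall>x\<in>set w. 0 < x \<Longrightarrow> annp p z w = annp p z' w"
  by (induction w arbitrary: p) auto

lemma annp_nth: "i < length w \<Longrightarrow> annp p z w ! i =
   (w ! i, if 0 < w ! i then p + npos (take (Suc i) w) else z + nz (take (Suc i) w))"
proof (induction w arbitrary: p z i)
  case Nil then show ?case by simp
next
  case (Cons x xs)
  then show ?case by (cases i) auto
qed

lemma annp_set_zero: "e \<in> set (annp p z w) \<Longrightarrow> fst e = 0 \<Longrightarrow> z < snd e \<and> snd e \<le> z + nz w"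
  by (induction w arbitrary: p z) (auto split: if_splits, fastforce+)

lemma annp_set_pos: "e \<in> set (annp p z w) \<Longrightarrow> 0 < fst e \<Longrightarrow> p < snd e \<and> snd e \<le> p + npos w"
  by (induction w arbitrary: p z) (auto split: if_splits, fastforce+)

lemma filter_annp: "filter (\<lambda>e. 0 < fst e) (annp p z w) = zip (Pos w) [Suc p..<Suc p + npos w]"
proof (induction w arbitrary: p z)
  case Nil then show ?case by simp
next
  case (Cons x xs)
  then show ?case by (auto simp: upt_conv_Cons)
qed

lemma hd_annp: "w \<noteq> [] \<Longrightarrow> hd (annp p z w) = (hd w, if 0 < hd w then Suc p else Suc z)"
  by (cases w) auto

lemma last_annp: "w \<noteq> [] \<Longrightarrow> last (annp p z w) = (last w, if 0 < last w then p + npos w else z + nz w)"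
proof (induction w rule: rev_induct)
  case Nil then show ?case by simp
next
  case (snoc x xs)
  then show ?case by (auto simp: annp_append)
qed

lemma annp_nil_iff[simp]: "annp p z w = [] \<longleftrightarrow> w = []"
  by (cases w) auto

definition adjl :: "('a \<Rightarrow> 'a \<Rightarrow> bool) \<Rightarrow> 'a list \<Rightarrow> bool list" where
  "adjl f L = map (\<lambda>(a, b). f a b) (zip L (tl L))"

lemma adjl_simps[simp]: "adjl f [] = []" "adjl f [x] = []"
  "adjl f (x # y # L) = f x y # adjl f (y # L)"
  by (auto simp: adjl_def)

lemma length_adjl[simp]: "length (adjl f L) = length L - 1"
  by (simp add: adjl_def)

lemma nth_adjl: "Suc i < length L \<Longrightarrow> adjl f L ! i = f (L ! i) (L ! Suc i)"
  by (simp add: adjl_def nth_tl)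

lemma adjl_Cons: "L \<noteq> [] \<Longrightarrow> adjl f (x # L) = f x (hd L) # adjl f L"
  by (cases L) auto

lemma adjl_append: "adjl f (L1 @ L2) =
   adjl f L1 @ (if L1 = [] \<or> L2 = [] then [] else [f (last L1) (hd L2)]) @ adjl f L2"
proof (induction L1)
  case Nil then show ?case by simp
next
  case (Cons x L1)
  show ?case
  proof (cases "L1 = []")
    case True
    then show ?thesis by (cases L2) auto
  next
    case False
    then show ?thesis using Cons by (cases L1) auto
  qed
qed

lemma adjl_map: "adjl f (map h L) = adjl (\<lambda>a b. f (h a) (h b)) L"
  by (simp add: adjl_def zip_map1 zip_map2 map_tl[symmetric] case_prod_unfold)

lemma adjl_cong: "(\<And>a b. a \<in> set L \<Longrightarrow> b \<in> set L \<Longrightarrow> f a b = g a b) \<Longrightarrow> adjl f L = adjl g L"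
  by (induction L rule: induct_list012) auto

lemma adjl_allF: "(\<And>i. Suc i < length L \<Longrightarrow> \<not> f (L ! i) (L ! Suc i)) \<Longrightarrow>
   adjl f L = replicate (length L - 1) False"
  by (rule nth_equalityI) (auto simp: nth_adjl)

lemma adjl_allT: "(\<And>i. Suc i < length L \<Longrightarrow> f (L ! i) (L ! Suc i)) \<Longrightarrow>
   adjl f L = replicate (length L - 1) True"
  by (rule nth_equalityI) (auto simp: nth_adjl)

definition idx :: "bool list \<Rightarrow> nat set" where
  "idx bs = {i. 1 \<le> i \<and> i \<le> length bs \<and> bs ! (i - 1)}"

lemma DES_adjl: "DES w = idx (adjl (\<lambda>x y. y < x) w)"
  unfolding DES_def idx_def
  by (auto simp: nth_adjl)


fun dm :: "nat \<Rightarrow> nat \<times> nat \<Rightarrow> nat \<times> nat \<Rightarrow> bool" where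
  "dm l (x, c) (y, d) = (if 0 < x \<and> 0 < y then y < x
     else if 0 < x then (l < d \<longrightarrow> c < x)
     else if 0 < y then (l < c \<and> y < d) else False)"

definition DESm :: "nat \<Rightarrow> nat list \<Rightarrow> nat set" where
  "DESm l w = idx (adjl (dm l) (ann w))"

lemma DESm_big: "nz w \<le> l \<Longrightarrow> DESm l w = DES w"
proof -
  assume l: "nz w \<le> l"
  have "adjl (dm l) (ann w) = adjl (\<lambda>a b. fst b < fst a) (ann w)"
  proof (rule adjl_cong)
    fix a b assume a: "a \<in> set (ann w)" and b: "b \<in> set (ann w)"
    have za: "fst a = 0 \<Longrightarrow> snd a \<le> l" using annp_set_zero[of a 0 0 w] a l by (auto simp: ann_def)
    have zb: "fst b = 0 \<Longrightarrow> snd b \<le> l" using annp_set_zero[of b 0 0 w] b l by (auto simp: ann_def)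
    obtain x c where ac: "a = (x, c)" by (cases a)
    obtain y d where bd: "b = (y, d)" by (cases b)
    show "dm l a b = (fst b < fst a)"
      using za zb unfolding ac bd by auto
  qed
  also have "\<dots> = adjl (\<lambda>x y. y < x) (map fst (ann w))" by (simp add: adjl_map)
  finally show ?thesis by (simp add: DESm_def DES_adjl ann_def)
qed

lemma adjl_dm_shift: "1 \<le> l \<Longrightarrow> (\<forall>e\<in>set L. fst e = 0 \<longrightarrow> snd e \<noteq> l) \<Longrightarrow>
  adjl (dm l) L = adjl (dm (l - 1)) L"
proof (rule adjl_cong)
  fix a b assume l: "1 \<le> l" and h: "\<forall>e\<in>set L. fst e = 0 \<longrightarrow> snd e \<noteq> l"
    and a: "a \<in> set L" and b: "b \<in> set L"
  obtain x c where ac: "a = (x, c)" by (cases a)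
  obtain y d where bd: "b = (y, d)" by (cases b)
  have "x = 0 \<longrightarrow> c \<noteq> l" using h a ac by auto
  moreover have "y = 0 \<longrightarrow> d \<noteq> l" using h b bd by auto
  ultimately show "dm l a b = dm (l - 1) a b"
    using l unfolding ac bd by auto
qed

lemma DESm_shift: "1 \<le> l \<Longrightarrow> nz w < l \<Longrightarrow> DESm l w = DESm (l - 1) w"
proof -
  assume l: "1 \<le> l" "nz w < l"
  have "\<forall>e\<in>set (ann w). fst e = 0 \<longrightarrow> snd e \<noteq> l"
  proof (intro ballI impI)
    fix e assume "e \<in> set (ann w)" "fst e = 0"
    then have "snd e \<le> nz w" using annp_set_zero[of e 0 0 w] by (simp add: ann_def)
    then show "snd e \<noteq> l" using l by simp
  qed
  then show ?thesis unfolding DESm_def using adjl_dm_shift l by simp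
qed


lemma zeropos_Nil[simp]: "zeropos [] = []" by (simp add: zeropos_def)

lemma zeropos_alt: "zeropos w = map Suc (filter (\<lambda>i. w ! i = 0) [0..<length w])"
proof -
  have "[1..<length w + 1] = map Suc [0..<length w]" by (simp add: map_Suc_upt)
  then show ?thesis by (simp add: zeropos_def filter_map o_def)
qed

lemma zeropos_Cons: "zeropos (x # w) = (if x = 0 then 1 # map Suc (zeropos w) else map Suc (zeropos w))"
proof -
  have "[0..<length (x # w)] = 0 # map Suc [0..<length w]"
    by (simp add: upt_conv_Cons map_Suc_upt del: upt_Suc)
  then show ?thesis by (simp add: zeropos_alt filter_map o_def)
qed

lemma length_zeropos: "length (zeropos w) = nz w"
  by (induction w) (auto simp: zeropos_Cons)

lemma zeropos_nth: "zeropos (A @ 0 # D) ! (nz A) = Suc (length A)"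
proof (induction A)
  case Nil then show ?case by (simp add: zeropos_Cons)
next
  case (Cons x A)
  have "nz A < length (zeropos (A @ 0 # D))" by (simp add: length_zeropos)
  then show ?case using Cons by (auto simp: zeropos_Cons)
qed

lemma zero_decomp: "1 \<le> l \<Longrightarrow> l \<le> nz w \<Longrightarrow> \<exists>A D. w = A @ 0 # D \<and> nz A = l - 1"
proof (induction w arbitrary: l)
  case Nil then show ?case by simp
next
  case (Cons x w)
  show ?case
  proof (cases "x = 0")
    case True
    show ?thesis
    proof (cases "l = 1")
      case True then show ?thesis using \<open>x = 0\<close> by (intro exI[of _ "[]"] exI[of _ w]) auto
    next
      case False
      have "1 \<le> l - 1" "l - 1 \<le> nz w" using False Cons.prems True by auto
      then obtain A D where "w = A @ 0 # D" "nz A = l - 1 - 1"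
        using Cons.IH[of "l - 1"] by auto
      then show ?thesis using True False Cons.prems by (intro exI[of _ "x # A"] exI[of _ D]) auto
    qed
  next
    case False
    then obtain A D where "w = A @ 0 # D" "nz A = l - 1"
      using Cons.IH[of l] Cons.prems by auto
    then show ?thesis using False by (intro exI[of _ "x # A"] exI[of _ D]) auto
  qed
qed

lemma nz_unique_decomp: "A1 @ 0 # C1 = A2 @ 0 # C2 \<Longrightarrow> nz A1 = nz A2 \<Longrightarrow> A1 = A2 \<and> C1 = C2"
proof (induction A1 arbitrary: A2)
  case Nil
  then show ?case by (cases A2) auto
next
  case (Cons x A1)
  show ?case
  proof (cases A2)
    case Nil
    then show ?thesis using Cons by auto
  next
    case (Cons y A2')
    then have "x = y" "A1 @ 0 # C1 = A2' @ 0 # C2" using Cons.prems by auto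
    moreover have "nz A1 = nz A2'" using Cons.prems \<open>A2 = y # A2'\<close> \<open>x = y\<close> by (auto split: if_splits)
    ultimately show ?thesis using Cons.IH \<open>A2 = y # A2'\<close> by auto
  qed
qed

lemma redw_eq: "redw w k = npos (take k w)"
  by (simp add: redw_def npos_def Pos_def)

lemma subexc_eq: "subexc w t \<longleftrightarrow> 1 \<le> t \<and> t \<le> length w \<and> 0 < w ! (t - 1) \<and> w ! (t - 1) < npos (take t w)"
  by (simp add: subexc_def redw_eq)

definition derw :: "nat list \<Rightarrow> bool" where
  "derw w \<longleftrightarrow> (\<forall>e\<in>set (ann w). 0 < fst e \<longrightarrow> fst e \<noteq> snd e)"

lemma derw_Pos: "derw w \<longleftrightarrow> (\<forall>i<npos w. Pos w ! i \<noteq> Suc i)"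
proof -
  have "derw w \<longleftrightarrow> (\<forall>e\<in>set (filter (\<lambda>e. 0 < fst e) (ann w)). fst e \<noteq> snd e)"
    unfolding derw_def set_filter by blast
  also have "\<dots> \<longleftrightarrow> (\<forall>e\<in>set (zip (Pos w) [1..<Suc (npos w)]). fst e \<noteq> snd e)"
    by (simp add: ann_def filter_annp)
  also have "\<dots> \<longleftrightarrow> (\<forall>i<npos w. Pos w ! i \<noteq> Suc i)"
  proof -
    have "set (zip (Pos w) [1..<Suc (npos w)]) = (\<lambda>i. (Pos w ! i, Suc i)) ` {..<npos w}"
      unfolding set_zip by (force simp: npos_def nth_upt simp del: upt_Suc)
    then show ?thesis by auto
  qed
  finally show ?thesis .
qed

definition Wset :: "nat \<Rightarrow> nat list set" where
  "Wset n = {w. length w = n \<and> distinct (Pos w) \<and> set (Pos w) = {1..npos w} \<and> derw w}"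

lemma Wset_cong: "v \<in> Wset n \<Longrightarrow> length w = length v \<Longrightarrow> Pos w = Pos v \<Longrightarrow> w \<in> Wset n"
  by (simp add: Wset_def derw_Pos npos_def)

lemma derw_app: "derw (A @ x # D) \<Longrightarrow> 0 < x \<Longrightarrow> x \<noteq> Suc (npos A)"
proof -
  assume d: "derw (A @ x # D)" and x: "0 < x"
  have "(x, Suc (npos A)) \<in> set (ann (A @ x # D))" using x by (simp add: ann_def annp_append)
  then show ?thesis using d x unfolding derw_def by fastforce
qed

lemma derw_last: "derw A' \<Longrightarrow> A' = A @ [x] \<Longrightarrow> 0 < x \<Longrightarrow> x \<noteq> npos A'"
  using derw_app[of A x "[]"] by simp

lemma derw_prefix: "derw (A @ D) \<Longrightarrow> derw A"
  unfolding derw_def ann_def annp_append by simp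


definition incr :: "nat list \<Rightarrow> bool" where
  "incr B \<longleftrightarrow> (\<forall>i. Suc i < length B \<longrightarrow> B ! i < B ! Suc i)"
definition decr :: "nat list \<Rightarrow> bool" where
  "decr B \<longleftrightarrow> (\<forall>i. Suc i < length B \<longrightarrow> B ! Suc i < B ! i)"

lemma incr_ge_hd: "incr B \<Longrightarrow> i < length B \<Longrightarrow> B ! 0 \<le> B ! i"
proof (induction i)
  case 0 then show ?case by simp
next
  case (Suc i)
  then have "B ! i < B ! Suc i" by (simp add: incr_def)
  then show ?case using Suc by simp
qed

lemma incr_pos: "incr B \<Longrightarrow> B \<noteq> [] \<Longrightarrow> 0 < hd B \<Longrightarrow> \<forall>x\<in>set B. 0 < x"
proof
  fix x assume "incr B" "B \<noteq> []" "0 < hd B" "x \<in> set B"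
  then obtain i where "i < length B" "x = B ! i" by (auto simp: in_set_conv_nth)
  then show "0 < x" using incr_ge_hd[OF \<open>incr B\<close>] \<open>0 < hd B\<close> \<open>B \<noteq> []\<close> by (fastforce simp: hd_conv_nth)
qed

lemma decr_bounds: "decr B \<Longrightarrow> i < length B \<Longrightarrow> B ! (length B - 1) \<le> B ! i \<and> B ! i \<le> B ! 0"
proof -
  assume d: "decr B" and i: "i < length B"
  have up: "B ! k \<le> B ! 0" if "k < length B" for k
    using that proof (induction k)
    case (Suc k) then have "B ! Suc k < B ! k" using d by (simp add: decr_def)
    then show ?case using Suc by simp
  qed simp
  have down: "B ! (length B - 1) \<le> B ! (length B - 1 - k)" if "k < length B" for k
    using that proof (induction k)
    case (Suc k)
    have e: "Suc (length B - 1 - Suc k) = length B - 1 - k" using Suc.prems by simp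
    have "Suc (length B - 1 - Suc k) < length B" using Suc.prems by simp
    then have "B ! Suc (length B - 1 - Suc k) < B ! (length B - 1 - Suc k)"
      using d unfolding decr_def by blast
    then have "B ! (length B - 1 - k) < B ! (length B - 1 - Suc k)" unfolding e .
    then show ?case using Suc by simp
  qed simp
  have "B ! (length B - 1) \<le> B ! i" using down[of "length B - 1 - i"] i by simp
  then show ?thesis using up i by simp
qed

lemma decr_pos: "decr B \<Longrightarrow> B \<noteq> [] \<Longrightarrow> 0 < last B \<Longrightarrow> \<forall>x\<in>set B. 0 < x"
proof
  fix x assume "decr B" "B \<noteq> []" "0 < last B" "x \<in> set B"
  then obtain i where "i < length B" "x = B ! i" by (auto simp: in_set_conv_nth)
  then show "0 < x" using decr_bounds[OF \<open>decr B\<close>, of i] \<open>0 < last B\<close> \<open>B \<noteq> []\<close>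
    by (simp add: last_conv_nth)
qed

lemma decr_last_le_hd: "decr B \<Longrightarrow> B \<noteq> [] \<Longrightarrow> last B \<le> hd B"
  using decr_bounds[of B 0] by (simp add: last_conv_nth hd_conv_nth)

definition caseA :: "nat \<Rightarrow> nat list \<Rightarrow> nat list \<Rightarrow> bool" where
  "caseA l w u \<longleftrightarrow> (\<exists>A C. w = A @ 0 # C \<and> u = w \<and> nz A = l - 1 \<and>
     (A = [] \<or> last A = 0 \<or> npos A < last A) \<and> (C = [] \<or> hd C = 0 \<or> Suc (npos A) < hd C))"

definition caseB :: "nat \<Rightarrow> nat list \<Rightarrow> nat list \<Rightarrow> bool" where
  "caseB l w u \<longleftrightarrow> (\<exists>A B C. w = A @ 0 # B @ C \<and> u = A @ B @ 0 # C \<and> nz A = l - 1 \<and> B \<noteq> [] \<and>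
     (\<forall>x\<in>set B. 0 < x) \<and> incr B \<and> last B < npos A + length B \<and>
     (A = [] \<or> last A = 0 \<or> hd B < last A) \<and>
     (C = [] \<or> hd C = 0 \<or> (hd C < last B \<longleftrightarrow> hd C < Suc (npos A + length B))))"

definition caseC :: "nat \<Rightarrow> nat list \<Rightarrow> nat list \<Rightarrow> bool" where
  "caseC l w u \<longleftrightarrow> (\<exists>A B C. w = A @ B @ 0 # C \<and> u = A @ 0 # B @ C \<and> nz A = l - 1 \<and> B \<noteq> [] \<and>
     (\<forall>x\<in>set B. 0 < x) \<and> decr B \<and> hd B < Suc (npos A) \<and> last B < npos A + length B \<and>
     (A = [] \<or> last A = 0 \<or> (hd B < last A \<longleftrightarrow> npos A < last A)) \<and>
     (C = [] \<or> hd C = 0 \<or> last B < hd C))"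

lemma phi_struct:
  assumes W: "distinct (Pos w)" "derw w" and l: "1 \<le> l" "l \<le> nz w"
  shows "caseA l w (phi_l l w) \<or> caseB l w (phi_l l w) \<or> caseC l w (phi_l l w)"
proof -
  obtain A D where w: "w = A @ 0 # D" and nzA: "nz A = l - 1" using zero_decomp l by blast
  have zj: "zeropos w ! (l - 1) = Suc (length A)" using zeropos_nth[of A D] w nzA by simp
  have lz: "\<not> (l < 1 \<or> l > length (zeropos w))" using l by (simp add: length_zeropos)
  have dA: "derw A" using W(2) w derw_prefix by blast
  have lw: "length w = Suc (length A + length D)" using w by simp
  have wD: "i < length D \<Longrightarrow> w ! (Suc (length A) + i) = D ! i" for i
    using w by (simp add: nth_append)
  have wA: "i < length A \<Longrightarrow> w ! i = A ! i" for i
    using w by (simp add: nth_append)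
  define SL where "SL = (A \<noteq> [] \<and> 0 < last A \<and> last A < npos A)"
  define SR where "SR = (D \<noteq> [] \<and> 0 < hd D \<and> hd D < Suc (npos A))"
  have SLe: "subexc w (length A) = SL"
  proof (cases "A = []")
    case True then show ?thesis by (simp add: SL_def subexc_eq)
  next
    case False
    then have "w ! (length A - Suc 0) = last A" using wA by (simp add: last_conv_nth)
    moreover have "take (length A) w = A" using w by simp
    moreover have "1 \<le> length A" using False by (cases A) auto
    ultimately show ?thesis using False lw by (simp add: SL_def subexc_eq)
  qed
  have SRe: "subexc w (Suc (Suc (length A))) = SR"
  proof (cases "D = []")
    case True then show ?thesis using lw by (simp add: SR_def subexc_eq)
  next
    case False
    then have "w ! Suc (length A) = hd D" using wD[of 0] by (simp add: hd_conv_nth)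
    moreover have "take (Suc (Suc (length A))) w = A @ [0, hd D]" using w False by (cases D) auto
    moreover have "1 \<le> length D" using False by (cases D) auto
    ultimately show ?thesis using False lw by (auto simp: SR_def subexc_eq)
  qed
  have xl: "A \<noteq> [] \<Longrightarrow> w ! (length A - Suc 0) = last A" using wA by (simp add: last_conv_nth)
  have xr: "D \<noteq> [] \<Longrightarrow> w ! Suc (length A) = hd D" using wD[of 0] by (simp add: hd_conv_nth)
  have distLD: "SL \<Longrightarrow> SR \<Longrightarrow> last A \<noteq> hd D"
  proof -
    assume "SL" "SR"
    then have "A \<noteq> []" "D \<noteq> []" "0 < last A" "0 < hd D" by (auto simp: SL_def SR_def)
    then have "Pos w = Pos (butlast A) @ [last A] @ [hd D] @ Pos (tl D)"
      using w by (cases D; cases A rule: rev_cases) auto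
    then show ?thesis using W(1) by auto
  qed
  define condB where "condB = ((\<not> SL \<and> SR) \<or> (SL \<and> SR \<and> hd D < last A))"
  define condC where "condC = ((SL \<and> \<not> SR) \<or> (SL \<and> SR \<and> last A < hd D))"
  show ?thesis
  proof (cases condB)
    case True
    have SR: SR using True unfolding condB_def by auto
    then have Dne: "D \<noteq> []" "0 < hd D" "hd D < Suc (npos A)" by (auto simp: SR_def)
    have c1: "subexc w (Suc (Suc (length A)))" using SRe SR by simp
    have c2: "\<not> subexc w (length A) \<or> (subexc w (length A) \<and> w ! Suc (length A) < w ! (length A - Suc 0))"
      using True SLe xl xr Dne unfolding condB_def SL_def by auto
    define P where "P = (\<lambda>k. Suc (Suc (length A)) \<le> k \<and> k \<le> length w \<and>
            (\<forall>t. Suc (Suc (length A)) \<le> t \<and> t < k \<longrightarrow> w ! (t - Suc 0) < w ! t) \<and>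
            w ! (k - Suc 0) < redw w k)"
    define K where "K = (GREATEST k. P k)"
    have phi: "phi_l l w = take (length A) w @ drop (Suc (length A)) (take K w) @ 0 # drop K w"
      using c2
    proof
      assume "\<not> subexc w (length A)"
      then show ?thesis unfolding phi_l_def Let_def zj K_def P_def using lz c1 by simp
    next
      assume "subexc w (length A) \<and> w ! Suc (length A) < w ! (length A - Suc 0)"
      then show ?thesis unfolding phi_l_def Let_def zj K_def P_def using lz c1 by simp
    qed
    have P0: "P (Suc (Suc (length A)))" using c1 unfolding P_def subexc_def by auto
    have bound: "\<And>k. P k \<Longrightarrow> k \<le> length w" unfolding P_def by auto
    have PK: "P K" unfolding K_def by (rule GreatestI_nat[of P, OF P0 bound])
    have maxK: "\<And>k. P k \<Longrightarrow> k \<le> K" unfolding K_def by (rule Greatest_le_nat[of P, OF _ bound])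
    define m where "m = K - Suc (length A)"
    have Km: "K = Suc (length A) + m" and m1: "1 \<le> m" and mD: "m \<le> length D"
      using PK lw unfolding m_def P_def by auto
    define B where "B = take m D"
    define C where "C = drop m D"
    have tk: "take K w = A @ 0 # B" using w Km unfolding B_def by simp
    have dk: "drop K w = C" using w Km unfolding C_def by simp
    have tA: "take (length A) w = A" using w by simp
    have phi2: "phi_l l w = A @ B @ 0 # C" using phi unfolding tk dk tA by simp
    have w2: "w = A @ 0 # B @ C" using w unfolding B_def C_def by simp
    have lB: "length B = m" using mD unfolding B_def by simp
    have Bne: "B \<noteq> []" using lB m1 by auto
    have Bnth: "i < m \<Longrightarrow> B ! i = w ! (Suc (length A) + i)" for i
      using wD[of i] mD unfolding B_def by simp
    have incB: "incr B"
      unfolding incr_def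
    proof (intro allI impI)
      fix i assume i: "Suc i < length B"
      have ch: "\<forall>t. Suc (Suc (length A)) \<le> t \<and> t < K \<longrightarrow> w ! (t - Suc 0) < w ! t"
        using PK unfolding P_def by blast
      have "Suc (Suc (length A)) + i < K" using i lB Km by simp
      then have "w ! (Suc (Suc (length A)) + i - Suc 0) < w ! (Suc (Suc (length A)) + i)"
        using ch[rule_format, of "Suc (Suc (length A)) + i"] by simp
      then show "B ! i < B ! Suc i" using Bnth i lB by simp
    qed
    have hdB: "hd B = hd D" using Bne unfolding B_def by (cases D) auto
    have posB: "\<forall>x\<in>set B. 0 < x" using incr_pos[OF incB Bne] hdB Dne by simp
    have lastB: "last B = w ! (K - Suc 0)"
      using Bnth[of "m - 1"] m1 lB Km Bne by (simp add: last_conv_nth)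
    have redK: "redw w K = npos A + m"
      using tk npos_allpos[OF posB] lB by (simp add: redw_eq)
    have subB: "last B < npos A + length B" using PK lastB redK lB unfolding P_def by simp
    have left: "A = [] \<or> last A = 0 \<or> hd B < last A"
    proof (cases SL)
      case True then show ?thesis using \<open>condB\<close> hdB unfolding condB_def by auto
    next
      case False
      then have "A = [] \<or> last A = 0 \<or> npos A < last A"
        using derw_last[OF dA, of "butlast A" "last A"] unfolding SL_def by force
      then show ?thesis using Dne hdB by auto
    qed
    have right: "C = [] \<or> hd C = 0 \<or> (hd C < last B \<longleftrightarrow> hd C < Suc (npos A + length B))"
    proof (cases "C = [] \<or> hd C = 0")
      case True then show ?thesis by blast
    next
      case False
      then have Cne: "C \<noteq> []" and hC: "0 < hd C" by auto
      have mlt: "m < length D" using Cne unfolding C_def by simp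
      have hdC: "hd C = w ! K" using wD[of m] mlt Km Cne unfolding C_def by (simp add: hd_drop_conv_nth)
      have tk2: "take (Suc K) w = A @ 0 # B @ [hd C]"
        using w2 Km lB Cne by (cases C) auto
      have red2: "redw w (Suc K) = Suc (npos A + m)"
        using tk2 npos_allpos[OF posB] lB hC by (simp add: redw_eq)
      have "\<not> P (Suc K)" using maxK by fastforce
      have nP: "\<not> (last B < hd C \<and> hd C < Suc (npos A + m))"
      proof
        assume a: "last B < hd C \<and> hd C < Suc (npos A + m)"
        have ch: "\<forall>t. Suc (Suc (length A)) \<le> t \<and> t < K \<longrightarrow> w ! (t - Suc 0) < w ! t"
          using PK unfolding P_def by blast
        have ch2: "\<forall>t. Suc (Suc (length A)) \<le> t \<and> t < Suc K \<longrightarrow> w ! (t - Suc 0) < w ! t"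
        proof (intro allI impI)
          fix t assume t: "Suc (Suc (length A)) \<le> t \<and> t < Suc K"
          show "w ! (t - Suc 0) < w ! t"
          proof (cases "t < K")
            case True then show ?thesis using ch t by blast
          next
            case False then have "t = K" using t by simp
            then show ?thesis using a lastB hdC by simp
          qed
        qed
        have "P (Suc K)" unfolding P_def using ch2 a hdC red2 PK mlt Km lw unfolding P_def by auto
        then show False using \<open>\<not> P (Suc K)\<close> by blast
      qed
      have "distinct (B @ Pos C)" using W(1) w2 Pos_allpos[OF posB] by simp
      moreover have "hd C \<in> set (Pos C)" using Cne hC by (cases C) auto
      moreover have "last B \<in> set B" using Bne by simp
      ultimately have "last B \<noteq> hd C" by auto
      then show ?thesis using nP subB lB by auto
    qed
    have "caseB l w (phi_l l w)"
      unfolding caseB_def using w2 phi2 nzA Bne posB incB subB left right by blast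
    then show ?thesis by simp
  next
    case nB: False
    show ?thesis
    proof (cases condC)
      case True
      have SL: SL using True unfolding condC_def by auto
      then have Ane: "A \<noteq> []" and lA: "0 < last A" "last A < npos A" by (auto simp: SL_def)
      have c1: "subexc w (length A)" using SLe SL by simp
      have c2: "\<not> subexc w (Suc (Suc (length A))) \<or> (subexc w (Suc (Suc (length A))) \<and> w ! (length A - Suc 0) < w ! Suc (length A))"
        using True SRe xl xr Ane unfolding condC_def SR_def by auto
      define Q where "Q = (\<lambda>i. 1 \<le> i \<and> i \<le> length A \<and> w ! (i - 1) < redw w i \<and>
            (\<forall>t. i \<le> t \<and> t < length A \<longrightarrow> w ! t < w ! (t - 1)))"
      define I where "I = (LEAST i. Q i)"
      have phi: "phi_l l w = take (I - 1) w @ 0 # drop (I - 1) (take (length A) w) @ drop (Suc (length A)) w"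
        using c2
      proof
        assume "\<not> subexc w (Suc (Suc (length A)))"
        then show ?thesis unfolding phi_l_def Let_def zj I_def Q_def using lz c1 by simp
      next
        assume "subexc w (Suc (Suc (length A))) \<and> w ! (length A - Suc 0) < w ! Suc (length A)"
        then show ?thesis unfolding phi_l_def Let_def zj I_def Q_def using lz c1 by simp
      qed
      have Q0: "Q (length A)" using c1 unfolding Q_def subexc_def by auto
      have QI: "Q I" unfolding I_def by (rule LeastI[of Q, OF Q0])
      have IA: "I \<le> length A" unfolding I_def by (rule Least_le[of Q, OF Q0])
      have notQ: "\<And>i. i < I \<Longrightarrow> \<not> Q i" unfolding I_def by (rule not_less_Least)
      have I1: "1 \<le> I" using QI unfolding Q_def by simp
      define A' where "A' = take (I - 1) A"
      define B where "B = drop (I - 1) A"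
      have AB: "A = A' @ B" unfolding A'_def B_def by simp
      have tA: "take (length A) w = A" using w by simp
      have tI: "take (I - 1) w = A'" using w IA unfolding A'_def by simp
      have dA: "drop (Suc (length A)) w = D" using w by simp
      have phi2: "phi_l l w = A' @ 0 # B @ D" using phi unfolding tA tI dA B_def by simp
      have w2: "w = A' @ B @ 0 # D" using w AB by simp
      have lB: "length B = length A - (I - 1)" unfolding B_def by simp
      have Bne: "B \<noteq> []" using lB IA I1 by auto
      have Bnth: "s < length B \<Longrightarrow> B ! s = w ! (I - 1 + s)" for s
        using wA lB IA I1 unfolding B_def by simp
      have decB: "decr B"
        unfolding decr_def
      proof (intro allI impI)
        fix s assume s: "Suc s < length B"
        have ch: "\<forall>t. I \<le> t \<and> t < length A \<longrightarrow> w ! t < w ! (t - 1)"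
          using QI unfolding Q_def by blast
        have "I + s < length A" using s lB I1 by simp
        then have "w ! (I + s) < w ! (I + s - 1)" using ch[rule_format, of "I + s"] by simp
        moreover have "B ! Suc s = w ! (I + s)" using Bnth[of "Suc s"] s I1 by simp
        moreover have "B ! s = w ! (I + s - 1)" using Bnth[of s] s I1 by simp
        ultimately show "B ! Suc s < B ! s" by simp
      qed
      have lastB: "last B = last A" using AB Bne by simp
      have posB: "\<forall>x\<in>set B. 0 < x" using decr_pos[OF decB Bne] lastB lA by simp
      have hdB: "hd B = w ! (I - 1)" using Bnth[of 0] Bne by (simp add: hd_conv_nth)
      have tkI: "take I w = A' @ [hd B]"
      proof -
        have "take I w = take I A" using w IA by simp
        also have "\<dots> = A' @ [hd B]" using AB Bne unfolding A'_def
          by (metis I1 Suc_diff_1 \<open>A = A' @ B\<close> hd_drop_conv_nth le_less_trans less_one not_le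
              take_hd_drop B_def A'_def lB length_greater_0_conv diff_less zero_less_one IA)
        finally show ?thesis .
      qed
      have redI: "redw w I = Suc (npos A')"
        using tkI posB Bne by (simp add: redw_eq)
      have subhB: "hd B < Suc (npos A')" using QI hdB redI unfolding Q_def by simp
      have subB: "last B < npos A' + length B"
        using decr_last_le_hd[OF decB Bne] subhB Bne by (cases B) auto
      have nzA': "nz A' = l - 1" using nzA AB nz_allpos[OF posB] by simp
      have left: "A' = [] \<or> last A' = 0 \<or> (hd B < last A' \<longleftrightarrow> npos A' < last A')"
      proof (cases "A' = [] \<or> last A' = 0")
        case True then show ?thesis by blast
      next
        case False
        then have A'ne: "A' \<noteq> []" and lA': "0 < last A'" by auto
        have I2: "2 \<le> I" using A'ne I1 unfolding A'_def by (cases "I - 1") auto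
        have "length A' = I - 1" using IA unfolding A'_def by simp
        then have "last A' = A ! (I - 2)" using A'ne I2 unfolding A'_def
          by (simp add: last_conv_nth numeral_2_eq_2)
        then have lA'w: "last A' = w ! (I - 2)" using wA[of "I - 2"] I2 IA by simp
        have redI1: "redw w (I - 1) = npos A'" using tI by (simp add: redw_eq)
        have dA': "derw A'" using W(2) w2 derw_prefix by blast
        have neq: "last A' \<noteq> npos A'"
          using derw_last[OF dA', of "butlast A'" "last A'"] A'ne lA' by simp
        have "\<not> Q (I - 1)" using notQ I2 by simp
        have nQ: "\<not> (last A' < npos A' \<and> hd B < last A')"
        proof
          assume a: "last A' < npos A' \<and> hd B < last A'"
          have ch: "\<forall>t. I \<le> t \<and> t < length A \<longrightarrow> w ! t < w ! (t - 1)"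
            using QI unfolding Q_def by blast
          have "\<forall>t. I - 1 \<le> t \<and> t < length A \<longrightarrow> w ! t < w ! (t - 1)"
          proof (intro allI impI)
            fix t assume t: "I - 1 \<le> t \<and> t < length A"
            show "w ! t < w ! (t - 1)"
            proof (cases "t = I - 1")
              case True
              then show ?thesis using a hdB lA'w I2 by (simp add: numeral_2_eq_2)
            next
              case False then show ?thesis using ch t by auto
            qed
          qed
          then have "Q (I - 1)" unfolding Q_def using a lA'w redI1 I2 IA
            by (auto simp: numeral_2_eq_2)
          then show False using \<open>\<not> Q (I - 1)\<close> by blast
        qed
        show ?thesis using nQ neq subhB by auto
      qed
      have right: "D = [] \<or> hd D = 0 \<or> last B < hd D"
      proof (cases SR)
        case True then show ?thesis using \<open>condC\<close> lastB unfolding condC_def by auto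
      next
        case False
        then have "D = [] \<or> hd D = 0 \<or> Suc (npos A) < hd D"
          using derw_app[of "A @ [0]" "hd D" "tl D"] W(2) w unfolding SR_def by (cases D) force+
        then show ?thesis using lA lastB by auto
      qed
      have "caseC l w (phi_l l w)"
        unfolding caseC_def using w2 phi2 nzA' Bne posB decB subhB subB left right by blast
      then show ?thesis by simp
    next
      case nC: False
      have nSL: "\<not> SL" and nSR: "\<not> SR"
        using nB nC distLD unfolding condB_def condC_def by (metis linorder_neqE_nat)+
      have "phi_l l w = w"
        unfolding phi_l_def Let_def zj using lz nSL nSR SLe SRe by simp
      moreover have "A = [] \<or> last A = 0 \<or> npos A < last A"
        using nSL derw_last[OF dA, of "butlast A" "last A"] unfolding SL_def by force
      moreover have "D = [] \<or> hd D = 0 \<or> Suc (npos A) < hd D"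
        using nSR derw_app[of "A @ [0]" "hd D" "tl D"] W(2) w unfolding SR_def by (cases D) force+
      ultimately have "caseA l w (phi_l l w)" unfolding caseA_def using w nzA by blast
      then show ?thesis by simp
    qed
  qed
qed



lemma adjl_mid: "adjl f (L1 @ e # L2) = adjl f L1 @ (if L1 = [] then [] else [f (last L1) e]) @
    (if L2 = [] then [] else [f e (hd L2)]) @ adjl f L2"
  by (simp add: adjl_append adjl_Cons)

lemma adjl_incr: "\<forall>x\<in>set B. 0 < x \<Longrightarrow> incr B \<Longrightarrow> adjl (dm k) (annp p z B) = replicate (length B - 1) False"
proof -
  assume pos: "\<forall>x\<in>set B. 0 < x" and inc: "incr B"
  have "adjl (dm k) (annp p z B) = replicate (length (annp p z B) - 1) False"
  proof (rule adjl_allF)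
    fix i assume i: "Suc i < length (annp p z B)"
    have "B ! Suc i \<in> set B" "B ! i \<in> set B" using i by auto
    then show "\<not> dm k (annp p z B ! i) (annp p z B ! Suc i)"
      using i pos inc unfolding incr_def by (auto simp: annp_nth)
  qed
  then show ?thesis by simp
qed

lemma adjl_decr: "\<forall>x\<in>set B. 0 < x \<Longrightarrow> decr B \<Longrightarrow> adjl (dm k) (annp p z B) = replicate (length B - 1) True"
proof -
  assume pos: "\<forall>x\<in>set B. 0 < x" and dec: "decr B"
  have "adjl (dm k) (annp p z B) = replicate (length (annp p z B) - 1) True"
  proof (rule adjl_allT)
    fix i assume i: "Suc i < length (annp p z B)"
    have "B ! Suc i \<in> set B" "B ! i \<in> set B" using i by auto
    then show "dm k (annp p z B ! i) (annp p z B ! Suc i)"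
      using i pos dec unfolding decr_def by (auto simp: annp_nth)
  qed
  then show ?thesis by simp
qed

lemma shift_low: "1 \<le> l \<Longrightarrow> nz A = l - 1 \<Longrightarrow> adjl (dm l) (annp 0 0 A) = adjl (dm (l - 1)) (annp 0 0 A)"
  by (rule adjl_dm_shift) (auto dest: annp_set_zero)

lemma shift_high: "1 \<le> l \<Longrightarrow> adjl (dm l) (annp p l C) = adjl (dm (l - 1)) (annp p l C)"
  by (rule adjl_dm_shift) (auto dest: annp_set_zero)


lemma gen_mid: "adjl f L1 = adjl g L1 \<Longrightarrow> adjl f L2 = adjl g L2 \<Longrightarrow>
   (L1 \<noteq> [] \<Longrightarrow> f (last L1) e = g (last L1) e) \<Longrightarrow> (L2 \<noteq> [] \<Longrightarrow> f e (hd L2) = g e (hd L2)) \<Longrightarrow>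
   adjl f (L1 @ e # L2) = adjl g (L1 @ e # L2)"
  by (cases "L1 = []"; cases "L2 = []") (simp_all add: adjl_mid adjl_Cons)

lemma gen_B: "adjl f LA = adjl g LA \<Longrightarrow> adjl f LC = adjl g LC \<Longrightarrow> LB \<noteq> [] \<Longrightarrow>
   adjl f LB = replicate (length LB - 1) c \<Longrightarrow> adjl g LB = replicate (length LB - 1) c \<Longrightarrow>
   f e (hd LB) = c \<Longrightarrow> g (last LB) e = c \<Longrightarrow>
   (LA \<noteq> [] \<Longrightarrow> f (last LA) e = g (last LA) (hd LB)) \<Longrightarrow>
   (LC \<noteq> [] \<Longrightarrow> f (last LB) (hd LC) = g e (hd LC)) \<Longrightarrow>
   adjl f (LA @ e # LB @ LC) = adjl g (LA @ LB @ e # LC)"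
  by (cases "LA = []"; cases "LC = []")
    (simp_all add: adjl_mid adjl_append adjl_Cons replicate_append_same[symmetric])

lemma DES_step:
  assumes l: "1 \<le> l" and c: "caseA l w u \<or> caseB l w u \<or> caseC l w u"
  shows "DESm (l - 1) u = DESm l w"
  using c
proof (elim disjE)
  assume "caseA l w u"
  then obtain A C where w: "w = A @ 0 # C" and u: "u = w" and nzA: "nz A = l - 1"
    and left: "A = [] \<or> last A = 0 \<or> npos A < last A"
    and right: "C = [] \<or> hd C = 0 \<or> Suc (npos A) < hd C" unfolding caseA_def by blast
  have sl: "Suc (l - 1) = l" using l by simp
  have aw: "ann w = annp 0 0 A @ (0, l) # annp (npos A) l C"
    using w nzA sl by (simp add: ann_def annp_append)
  have b1: "A \<noteq> [] \<Longrightarrow> dm l (last (annp 0 0 A)) (0, l) = dm (l - 1) (last (annp 0 0 A)) (0, l)"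
    using left l by (auto simp: last_annp)
  have b2: "C \<noteq> [] \<Longrightarrow> dm l (0, l) (hd (annp (npos A) l C)) = dm (l - 1) (0, l) (hd (annp (npos A) l C))"
    using right l by (auto simp: hd_annp)
  show ?thesis unfolding DESm_def u aw
    by (rule arg_cong[where f=idx], rule gen_mid[OF shift_low[OF l nzA, symmetric] shift_high[OF l, symmetric]])
      (use b1 b2 in auto)
next
  assume "caseB l w u"
  then obtain A B C where w: "w = A @ 0 # B @ C" and u: "u = A @ B @ 0 # C" and nzA: "nz A = l - 1"
    and Bne: "B \<noteq> []" and pos: "\<forall>x\<in>set B. 0 < x" and inc: "incr B"
    and sub: "last B < npos A + length B"
    and left: "A = [] \<or> last A = 0 \<or> hd B < last A"
    and right: "C = [] \<or> hd C = 0 \<or> (hd C < last B \<longleftrightarrow> hd C < Suc (npos A + length B))"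
    unfolding caseB_def by blast
  have sl: "Suc (l - 1) = l" using l by simp
  have nB: "npos B = length B" "nz B = 0" using pos by (auto simp: npos_allpos nz_allpos)
  have aw: "ann w = annp 0 0 A @ (0, l) # (annp (npos A) l B @ annp (npos A + length B) l C)"
    using w nzA sl nB by (simp add: ann_def annp_append)
  have au: "ann u = (annp 0 0 A @ annp (npos A) l B) @ (0, l) # annp (npos A + length B) l C"
    using u nzA sl nB annp_allpos[OF pos, of "npos A" "l - 1" l] by (simp add: ann_def annp_append)
  have LBne: "annp (npos A) l B \<noteq> []" using Bne by simp
  have hB: "hd (annp (npos A) l B) = (hd B, Suc (npos A))" and lB: "last (annp (npos A) l B) = (last B, npos A + length B)"
    using Bne pos nB by (auto simp: hd_annp last_annp)
  have hBpos: "0 < hd B" "0 < last B" using pos Bne by auto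
  have b1: "A \<noteq> [] \<Longrightarrow> dm l (last (annp 0 0 A)) (0, l) = dm (l - 1) (last (annp 0 0 A)) (hd B, Suc (npos A))"
    using left l hBpos nzA by (auto simp: last_annp)
  have b2: "C \<noteq> [] \<Longrightarrow> dm l (last B, npos A + length B) (hd (annp (npos A + length B) l C)) =
       dm (l - 1) (0, l) (hd (annp (npos A + length B) l C))"
    using right l hBpos sub by (auto simp: hd_annp)
  have b3: "dm (l - 1) (last B, npos A + length B) (0, l) = False" using sub l by auto
  have b4: "dm l (0, l) (hd B, Suc (npos A)) = False" by simp
  have r: "replicate (length B - 1) False @ [False] = False # replicate (length B - 1) False"
    by (simp add: replicate_append_same)
  have "adjl (dm l) (annp 0 0 A @ (0, l) # annp (npos A) l B @ annp (npos A + length B) l C) =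
     adjl (dm (l - 1)) (annp 0 0 A @ annp (npos A) l B @ (0, l) # annp (npos A + length B) l C)"
    by (rule gen_B[OF shift_low[OF l nzA] shift_high[OF l] LBne, where c=False])
      (use adjl_incr[OF pos inc, of l "npos A" l] adjl_incr[OF pos inc, of "l - 1" "npos A" l] b1 b2 b3 b4 hB lB in auto)
  then show ?thesis unfolding DESm_def aw au by simp
next
  assume "caseC l w u"
  then obtain A B C where w: "w = A @ B @ 0 # C" and u: "u = A @ 0 # B @ C" and nzA: "nz A = l - 1"
    and Bne: "B \<noteq> []" and pos: "\<forall>x\<in>set B. 0 < x" and dec: "decr B"
    and subh: "hd B < Suc (npos A)" and sub: "last B < npos A + length B"
    and left: "A = [] \<or> last A = 0 \<or> (hd B < last A \<longleftrightarrow> npos A < last A)"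
    and right: "C = [] \<or> hd C = 0 \<or> last B < hd C"
    unfolding caseC_def by blast
  have sl: "Suc (l - 1) = l" using l by simp
  have nB: "npos B = length B" "nz B = 0" using pos by (auto simp: npos_allpos nz_allpos)
  have au: "ann u = annp 0 0 A @ (0, l) # (annp (npos A) l B @ annp (npos A + length B) l C)"
    using u nzA sl nB by (simp add: ann_def annp_append)
  have aw: "ann w = (annp 0 0 A @ annp (npos A) l B) @ (0, l) # annp (npos A + length B) l C"
    using w nzA sl nB annp_allpos[OF pos, of "npos A" "l - 1" l] by (simp add: ann_def annp_append)
  have LBne: "annp (npos A) l B \<noteq> []" using Bne by simp
  have hB: "hd (annp (npos A) l B) = (hd B, Suc (npos A))" and lB: "last (annp (npos A) l B) = (last B, npos A + length B)"
    using Bne pos nB by (auto simp: hd_annp last_annp)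
  have hBpos: "0 < hd B" "0 < last B" using pos Bne by auto
  have b1: "A \<noteq> [] \<Longrightarrow> dm l (last (annp 0 0 A)) (hd B, Suc (npos A)) = dm (l - 1) (last (annp 0 0 A)) (0, l)"
    using left l hBpos nzA by (auto simp: last_annp)
  have b2: "C \<noteq> [] \<Longrightarrow> dm l (0, l) (hd (annp (npos A + length B) l C)) =
       dm (l - 1) (last B, npos A + length B) (hd (annp (npos A + length B) l C))"
    using right l hBpos sub by (auto simp: hd_annp)
  have b3: "dm l (last B, npos A + length B) (0, l) = True" using hBpos by auto
  have b4: "dm (l - 1) (0, l) (hd B, Suc (npos A)) = True" using subh l hBpos by auto
  have r: "replicate (length B - 1) True @ [True] = True # replicate (length B - 1) True"
    by (simp add: replicate_append_same)
  have "adjl (dm (l - 1)) (annp 0 0 A @ (0, l) # annp (npos A) l B @ annp (npos A + length B) l C) =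
     adjl (dm l) (annp 0 0 A @ annp (npos A) l B @ (0, l) # annp (npos A + length B) l C)"
    by (rule gen_B[OF shift_low[OF l nzA, symmetric] shift_high[OF l, symmetric] LBne, where c=True])
      (use adjl_decr[OF pos dec, of l "npos A" l] adjl_decr[OF pos dec, of "l - 1" "npos A" l] b1 b2 b3 b4 hB lB in auto)
  then show ?thesis unfolding DESm_def aw au by simp
qed


lemma phi_id: "l < 1 \<or> nz w < l \<Longrightarrow> phi_l l w = w"
  unfolding phi_l_def by (auto simp: length_zeropos)

lemma cases_Pos: "caseA l w u \<or> caseB l w u \<or> caseC l w u \<Longrightarrow> Pos u = Pos w \<and> length u = length w"
  unfolding caseA_def caseB_def caseC_def by auto

lemma phi_Pos: "distinct (Pos w) \<Longrightarrow> derw w \<Longrightarrow> Pos (phi_l l w) = Pos w \<and> length (phi_l l w) = length w"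
proof (cases "l < 1 \<or> nz w < l")
  case True then show ?thesis by (simp add: phi_id)
next
  case False
  assume "distinct (Pos w)" "derw w"
  then show ?thesis using phi_struct[of w l] False cases_Pos by auto
qed

lemma Wset_distinct: "w \<in> Wset n \<Longrightarrow> distinct (Pos w)" and Wset_derw: "w \<in> Wset n \<Longrightarrow> derw w"
  and Wset_length: "w \<in> Wset n \<Longrightarrow> length w = n"
  by (auto simp: Wset_def)

lemma phi_W: "w \<in> Wset n \<Longrightarrow> phi_l l w \<in> Wset n"
  using phi_Pos[of w l] Wset_cong[of w n "phi_l l w"] by (auto simp: Wset_def)

definition SLp :: "nat list \<Rightarrow> bool" where "SLp P \<longleftrightarrow> P \<noteq> [] \<and> 0 < last P \<and> last P < npos P"
definition SRp :: "nat list \<Rightarrow> nat list \<Rightarrow> bool" where "SRp P S \<longleftrightarrow> S \<noteq> [] \<and> 0 < hd S \<and> hd S < Suc (npos P)"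

lemma caseA_u: "caseA l w u \<Longrightarrow> \<exists>P S. u = P @ 0 # S \<and> nz P = l - 1 \<and> \<not> SLp P \<and> \<not> SRp P S"
  unfolding caseA_def SLp_def SRp_def by fastforce

lemma caseB_u: "caseB l w u \<Longrightarrow> \<exists>P S. u = P @ 0 # S \<and> nz P = l - 1 \<and> SLp P \<and> \<not> (SRp P S \<and> last P < hd S)"
proof -
  assume "caseB l w u"
  then obtain A B C where u: "u = A @ B @ 0 # C" and nzA: "nz A = l - 1"
    and Bne: "B \<noteq> []" and pos: "\<forall>x\<in>set B. 0 < x"
    and sub: "last B < npos A + length B"
    and right: "C = [] \<or> hd C = 0 \<or> (hd C < last B \<longleftrightarrow> hd C < Suc (npos A + length B))"
    unfolding caseB_def by blast
  have nB: "npos B = length B" "nz B = 0" using pos by (auto simp: npos_allpos nz_allpos)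
  have "last B > 0" using pos Bne by auto
  then have "SLp (A @ B)" using Bne sub nB by (simp add: SLp_def)
  moreover have "\<not> (SRp (A @ B) C \<and> last (A @ B) < hd C)" using right Bne nB by (auto simp: SRp_def)
  ultimately show ?thesis using u nzA nB by (intro exI[of _ "A @ B"] exI[of _ C]) auto
qed

lemma caseC_u: "caseC l w u \<Longrightarrow> \<exists>P S. u = P @ 0 # S \<and> nz P = l - 1 \<and> SRp P S \<and> \<not> (SLp P \<and> hd S < last P)"
proof -
  assume "caseC l w u"
  then obtain A B C where u: "u = A @ 0 # B @ C" and nzA: "nz A = l - 1"
    and Bne: "B \<noteq> []" and pos: "\<forall>x\<in>set B. 0 < x"
    and subh: "hd B < Suc (npos A)"
    and left: "A = [] \<or> last A = 0 \<or> (hd B < last A \<longleftrightarrow> npos A < last A)"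
    unfolding caseC_def by blast
  have "hd B > 0" using pos Bne by auto
  then have "SRp A (B @ C)" using Bne subh by (simp add: SRp_def)
  moreover have "\<not> (SLp A \<and> hd (B @ C) < last A)" using left Bne by (auto simp: SLp_def)
  ultimately show ?thesis using u nzA by (intro exI[of _ A] exI[of _ "B @ C"]) auto
qed

lemma distinct_LR: "distinct (Pos (P @ 0 # S)) \<Longrightarrow> SLp P \<Longrightarrow> SRp P S \<Longrightarrow> last P \<noteq> hd S"
proof -
  assume d: "distinct (Pos (P @ 0 # S))" and "SLp P" "SRp P S"
  then have "P \<noteq> []" "S \<noteq> []" "0 < last P" "0 < hd S" by (auto simp: SLp_def SRp_def)
  then have "last P \<in> set (Pos P)" "hd S \<in> set (Pos S)"
    by (cases P rule: rev_cases; simp; cases S; simp)+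
  then show ?thesis using d by auto
qed

lemma uniqB_aux: "A1 = A2 @ us \<Longrightarrow> us @ B1 = B2 \<Longrightarrow> us \<noteq> [] \<Longrightarrow> B1 \<noteq> [] \<Longrightarrow> incr B2 \<Longrightarrow>
  \<forall>x\<in>set B2. 0 < x \<Longrightarrow> (A1 = [] \<or> last A1 = 0 \<or> hd B1 < last A1) \<Longrightarrow> False"
proof -
  assume a: "A1 = A2 @ us" "us @ B1 = B2" "us \<noteq> []" "B1 \<noteq> []" "incr B2" "\<forall>x\<in>set B2. 0 < x"
    and left: "A1 = [] \<or> last A1 = 0 \<or> hd B1 < last A1"
  have "last us \<in> set B2" using a by auto
  then have lpos: "0 < last us" using a by auto
  have "Suc (length us - 1) < length B2" using a by auto
  then have "B2 ! (length us - 1) < B2 ! Suc (length us - 1)" using a(5) unfolding incr_def by blast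
  moreover have "B2 ! (length us - 1) = last us" using a(2)[symmetric] a(3) by (simp add: nth_append last_conv_nth)
  moreover have "B2 ! Suc (length us - 1) = hd B1" using a(2)[symmetric] a(3,4) by (simp add: nth_append hd_conv_nth)
  ultimately have "last us < hd B1" by simp
  moreover have "last A1 = last us" using a by simp
  ultimately show False using left lpos a by auto
qed

lemma uniqB: "A1 @ B1 = A2 @ B2 \<Longrightarrow> B1 \<noteq> [] \<Longrightarrow> B2 \<noteq> [] \<Longrightarrow> incr B1 \<Longrightarrow> incr B2 \<Longrightarrow>
  \<forall>x\<in>set B1. 0 < x \<Longrightarrow> \<forall>x\<in>set B2. 0 < x \<Longrightarrow>
  (A1 = [] \<or> last A1 = 0 \<or> hd B1 < last A1) \<Longrightarrow> (A2 = [] \<or> last A2 = 0 \<or> hd B2 < last A2) \<Longrightarrow>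
  A1 = A2 \<and> B1 = B2"
proof -
  assume e: "A1 @ B1 = A2 @ B2" and h: "B1 \<noteq> []" "B2 \<noteq> []" "incr B1" "incr B2"
    "\<forall>x\<in>set B1. 0 < x" "\<forall>x\<in>set B2. 0 < x"
    and l1: "A1 = [] \<or> last A1 = 0 \<or> hd B1 < last A1" and l2: "A2 = [] \<or> last A2 = 0 \<or> hd B2 < last A2"
  from e obtain us where "A1 = A2 @ us \<and> us @ B1 = B2 \<or> A1 @ us = A2 \<and> B1 = us @ B2"
    unfolding append_eq_append_conv2 by blast
  then show ?thesis
  proof
    assume a: "A1 = A2 @ us \<and> us @ B1 = B2"
    show ?thesis
    proof (cases "us = []")
      case True then show ?thesis using a by simp
    next
      case False then show ?thesis using uniqB_aux[of A1 A2 us B1 B2] a h l1 by blast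
    qed
  next
    assume a: "A1 @ us = A2 \<and> B1 = us @ B2"
    show ?thesis
    proof (cases "us = []")
      case True then show ?thesis using a by simp
    next
      case False then show ?thesis using uniqB_aux[of A2 A1 us B2 B1] a h l2 by blast
    qed
  qed
qed

lemma uniqC_aux: "B2 = B1 @ us \<Longrightarrow> C1 = us @ C2 \<Longrightarrow> us \<noteq> [] \<Longrightarrow> B1 \<noteq> [] \<Longrightarrow> decr B2 \<Longrightarrow>
  \<forall>x\<in>set B2. 0 < x \<Longrightarrow> (C1 = [] \<or> hd C1 = 0 \<or> last B1 < hd C1) \<Longrightarrow> False"
proof -
  assume a: "B2 = B1 @ us" "C1 = us @ C2" "us \<noteq> []" "B1 \<noteq> []" "decr B2" "\<forall>x\<in>set B2. 0 < x"
    and right: "C1 = [] \<or> hd C1 = 0 \<or> last B1 < hd C1"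
  have "hd us \<in> set B2" using a by auto
  then have hpos: "0 < hd us" using a by auto
  have "Suc (length B1 - 1) < length B2" using a by auto
  then have "B2 ! Suc (length B1 - 1) < B2 ! (length B1 - 1)" using a(5) unfolding decr_def by blast
  moreover have "B2 ! (length B1 - 1) = last B1" using a(1) a(4) by (simp add: nth_append last_conv_nth)
  moreover have "B2 ! Suc (length B1 - 1) = hd us" using a(1) a(3,4) by (simp add: nth_append hd_conv_nth)
  ultimately have "hd us < last B1" by simp
  moreover have "hd C1 = hd us" using a by simp
  ultimately show False using right hpos a by auto
qed

lemma uniqC: "B1 @ C1 = B2 @ C2 \<Longrightarrow> B1 \<noteq> [] \<Longrightarrow> B2 \<noteq> [] \<Longrightarrow> decr B1 \<Longrightarrow> decr B2 \<Longrightarrow>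
  \<forall>x\<in>set B1. 0 < x \<Longrightarrow> \<forall>x\<in>set B2. 0 < x \<Longrightarrow>
  (C1 = [] \<or> hd C1 = 0 \<or> last B1 < hd C1) \<Longrightarrow> (C2 = [] \<or> hd C2 = 0 \<or> last B2 < hd C2) \<Longrightarrow>
  B1 = B2 \<and> C1 = C2"
proof -
  assume e: "B1 @ C1 = B2 @ C2" and h: "B1 \<noteq> []" "B2 \<noteq> []" "decr B1" "decr B2"
    "\<forall>x\<in>set B1. 0 < x" "\<forall>x\<in>set B2. 0 < x"
    and r1: "C1 = [] \<or> hd C1 = 0 \<or> last B1 < hd C1" and r2: "C2 = [] \<or> hd C2 = 0 \<or> last B2 < hd C2"
  from e obtain us where "B1 = B2 @ us \<and> us @ C1 = C2 \<or> B1 @ us = B2 \<and> C1 = us @ C2"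
    unfolding append_eq_append_conv2 by blast
  then show ?thesis
  proof
    assume a: "B1 = B2 @ us \<and> us @ C1 = C2"
    show ?thesis
    proof (cases "us = []")
      case True then show ?thesis using a by simp
    next
      case False then show ?thesis using uniqC_aux[of B1 B2 us C2 C1] a h r2 by blast
    qed
  next
    assume a: "B1 @ us = B2 \<and> C1 = us @ C2"
    show ?thesis
    proof (cases "us = []")
      case True then show ?thesis using a by simp
    next
      case False then show ?thesis using uniqC_aux[of B2 B1 us C1 C2] a h r1 by blast
    qed
  qed
qed

lemma phi_inj_cases:
  assumes d: "distinct (Pos u)"
    and c1: "caseA l w1 u \<or> caseB l w1 u \<or> caseC l w1 u"
    and c2: "caseA l w2 u \<or> caseB l w2 u \<or> caseC l w2 u"
  shows "w1 = w2"
proof -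
  have excl: False if "P1 @ 0 # S1 = P2 @ 0 # S2" "nz P1 = nz P2" "X1 P1 S1" "Y2 P2 S2"
    "\<And>P S. distinct (Pos (P @ 0 # S)) \<Longrightarrow> X1 P S \<Longrightarrow> Y2 P S \<Longrightarrow> False"
    "u = P1 @ 0 # S1" for P1 S1 P2 S2 and X1 Y2 :: "nat list \<Rightarrow> nat list \<Rightarrow> bool"
    using nz_unique_decomp[OF that(1,2)] that d by auto
  have AB: False if h: "caseA l w1 u" "caseB l w2 u" for w1 w2
  proof -
    obtain P1 S1 where 1: "u = P1 @ 0 # S1" "nz P1 = l - 1" "\<not> SLp P1" "\<not> SRp P1 S1" using caseA_u[OF h(1)] by blast
    obtain P2 S2 where 2: "u = P2 @ 0 # S2" "nz P2 = l - 1" "SLp P2" "\<not> (SRp P2 S2 \<and> last P2 < hd S2)" using caseB_u[OF h(2)] by blast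
    show False using nz_unique_decomp[of P1 S1 P2 S2] 1 2 by auto
  qed
  have AC: False if h: "caseA l w1 u" "caseC l w2 u" for w1 w2
  proof -
    obtain P1 S1 where 1: "u = P1 @ 0 # S1" "nz P1 = l - 1" "\<not> SLp P1" "\<not> SRp P1 S1" using caseA_u[OF h(1)] by blast
    obtain P2 S2 where 2: "u = P2 @ 0 # S2" "nz P2 = l - 1" "SRp P2 S2" using caseC_u[OF h(2)] by blast
    show False using nz_unique_decomp[of P1 S1 P2 S2] 1 2 by auto
  qed
  have BC: False if h: "caseB l w1 u" "caseC l w2 u" for w1 w2
  proof -
    obtain P1 S1 where 1: "u = P1 @ 0 # S1" "nz P1 = l - 1" "SLp P1" "\<not> (SRp P1 S1 \<and> last P1 < hd S1)" using caseB_u[OF h(1)] by blast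
    obtain P2 S2 where 2: "u = P2 @ 0 # S2" "nz P2 = l - 1" "SRp P2 S2" "\<not> (SLp P2 \<and> hd S2 < last P2)" using caseC_u[OF h(2)] by blast
    have e: "P1 = P2" "S1 = S2" using nz_unique_decomp[of P1 S1 P2 S2] 1 2 by auto
    have "last P1 \<noteq> hd S1" using distinct_LR[of P1 S1] d 1 2 e by auto
    then show False using 1 2 e by auto
  qed
  have AA: "w1 = w2" if "caseA l w1 u" "caseA l w2 u" using that unfolding caseA_def by auto
  have BB: "w1 = w2" if h: "caseB l w1 u" "caseB l w2 u"
  proof -
    obtain A1 B1 C1 where 1: "w1 = A1 @ 0 # B1 @ C1" "u = A1 @ B1 @ 0 # C1" "nz A1 = l - 1" "B1 \<noteq> []"
      "\<forall>x\<in>set B1. 0 < x" "incr B1" "A1 = [] \<or> last A1 = 0 \<or> hd B1 < last A1"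
      using h(1) unfolding caseB_def by blast
    obtain A2 B2 C2 where 2: "w2 = A2 @ 0 # B2 @ C2" "u = A2 @ B2 @ 0 # C2" "nz A2 = l - 1" "B2 \<noteq> []"
      "\<forall>x\<in>set B2. 0 < x" "incr B2" "A2 = [] \<or> last A2 = 0 \<or> hd B2 < last A2"
      using h(2) unfolding caseB_def by blast
    have "nz (A1 @ B1) = nz (A2 @ B2)" using 1 2 by (simp add: nz_allpos)
    then have "A1 @ B1 = A2 @ B2" "C1 = C2" using nz_unique_decomp[of "A1 @ B1" C1 "A2 @ B2" C2] 1 2 by auto
    then show ?thesis using uniqB[of A1 B1 A2 B2] 1 2 by auto
  qed
  have CC: "w1 = w2" if h: "caseC l w1 u" "caseC l w2 u"
  proof -
    obtain A1 B1 C1 where 1: "w1 = A1 @ B1 @ 0 # C1" "u = A1 @ 0 # B1 @ C1" "nz A1 = l - 1" "B1 \<noteq> []"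
      "\<forall>x\<in>set B1. 0 < x" "decr B1" "C1 = [] \<or> hd C1 = 0 \<or> last B1 < hd C1"
      using h(1) unfolding caseC_def by blast
    obtain A2 B2 C2 where 2: "w2 = A2 @ B2 @ 0 # C2" "u = A2 @ 0 # B2 @ C2" "nz A2 = l - 1" "B2 \<noteq> []"
      "\<forall>x\<in>set B2. 0 < x" "decr B2" "C2 = [] \<or> hd C2 = 0 \<or> last B2 < hd C2"
      using h(2) unfolding caseC_def by blast
    have "A1 = A2" "B1 @ C1 = B2 @ C2" using nz_unique_decomp[of A1 "B1 @ C1" A2 "B2 @ C2"] 1 2 by auto
    then show ?thesis using uniqC[of B1 C1 B2 C2] 1 2 by auto
  qed
  show ?thesis using c1 c2 AA BB CC AB AC BC by metis
qed

lemma phi_inj: "w1 \<in> Wset n \<Longrightarrow> w2 \<in> Wset n \<Longrightarrow> phi_l l w1 = phi_l l w2 \<Longrightarrow> w1 = w2"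
proof -
  assume w1: "w1 \<in> Wset n" and w2: "w2 \<in> Wset n" and e: "phi_l l w1 = phi_l l w2"
  have p1: "Pos (phi_l l w1) = Pos w1 \<and> length (phi_l l w1) = length w1"
    using phi_Pos Wset_distinct[OF w1] Wset_derw[OF w1] by blast
  have p2: "Pos (phi_l l w2) = Pos w2 \<and> length (phi_l l w2) = length w2"
    using phi_Pos Wset_distinct[OF w2] Wset_derw[OF w2] by blast
  have "npos w1 = npos w2" "length w1 = length w2" using p1 p2 e by (auto simp: npos_def)
  then have nzeq: "nz w1 = nz w2" using npos_nz[of w1] npos_nz[of w2] by simp
  show ?thesis
  proof (cases "l < 1 \<or> nz w1 < l")
    case True then show ?thesis using e nzeq by (simp add: phi_id)
  next
    case False
    have c1: "caseA l w1 (phi_l l w1) \<or> caseB l w1 (phi_l l w1) \<or> caseC l w1 (phi_l l w1)"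
      using phi_struct[OF Wset_distinct[OF w1] Wset_derw[OF w1]] False by simp
    have c2: "caseA l w2 (phi_l l w1) \<or> caseB l w2 (phi_l l w1) \<or> caseC l w2 (phi_l l w1)"
      using phi_struct[OF Wset_distinct[OF w2] Wset_derw[OF w2]] False nzeq e by simp
    have "distinct (Pos (phi_l l w1))" using p1 Wset_distinct[OF w1] by simp
    then show ?thesis using phi_inj_cases c1 c2 by blast
  qed
qed


lemma foldr_W: "w \<in> Wset n \<Longrightarrow> foldr phi_l xs w \<in> Wset n"
  by (induction xs) (auto intro: phi_W)

lemma foldr_Pos: "w \<in> Wset n \<Longrightarrow> Pos (foldr phi_l xs w) = Pos w"
proof (induction xs)
  case Nil then show ?case by simp
next
  case (Cons x xs)
  have "foldr phi_l xs w \<in> Wset n" using foldr_W Cons.prems by blast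
  then show ?case using Cons phi_Pos[of "foldr phi_l xs w" x] Wset_distinct Wset_derw by auto
qed

lemma foldr_inj: "inj_on (foldr phi_l xs) (Wset n)"
proof (induction xs)
  case Nil then show ?case by simp
next
  case (Cons x xs)
  show ?case
  proof (rule inj_onI)
    fix v w assume v: "v \<in> Wset n" and w: "w \<in> Wset n" and e: "foldr phi_l (x # xs) v = foldr phi_l (x # xs) w"
    have "foldr phi_l xs v = foldr phi_l xs w"
      using phi_inj[OF foldr_W[OF v] foldr_W[OF w]] e by simp
    then show "v = w" using Cons.IH v w by (auto dest: inj_onD)
  qed
qed

lemma DESm_phi: "v \<in> Wset n \<Longrightarrow> 1 \<le> l \<Longrightarrow> DESm (l - 1) (phi_l l v) = DESm l v"
proof (cases "nz v < l")
  case True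
  assume "1 \<le> l"
  then show ?thesis using True DESm_shift[of l v] phi_id[of l v] by simp
next
  case False
  assume v: "v \<in> Wset n" and l: "1 \<le> l"
  show ?thesis
    using DES_step[OF l phi_struct[OF Wset_distinct[OF v] Wset_derw[OF v] l]] False by simp
qed

lemma foldr_DES: "w \<in> Wset n \<Longrightarrow> d \<le> n \<Longrightarrow> DESm (n - d) (foldr phi_l [Suc (n - d)..<Suc n] w) = DES w"
proof (induction d)
  case 0
  have "nz w \<le> n" using npos_nz[of w] Wset_length[OF 0(1)] by simp
  then show ?case using DESm_big by simp
next
  case (Suc d)
  define l where "l = n - d"
  have l1: "1 \<le> l" using Suc.prems l_def by simp
  have e1: "n - Suc d = l - 1" using l_def by simp
  have s1: "Suc (l - 1) = l" using l1 by simp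
  have "l < Suc n" using l_def by simp
  then have e2: "[Suc (l - 1)..<Suc n] = l # [Suc l..<Suc n]"
    unfolding s1 by (rule upt_conv_Cons)
  have v: "foldr phi_l [Suc l..<Suc n] w \<in> Wset n" using foldr_W Suc.prems by blast
  have "DESm (l - 1) (foldr phi_l [Suc (l - 1)..<Suc n] w) = DESm l (foldr phi_l [Suc l..<Suc n] w)"
    unfolding e2 using DESm_phi[OF v l1] by simp
  also have "\<dots> = DES w" using Suc l_def by simp
  finally show ?case unfolding e1 .
qed

lemma PhiW_W: "w \<in> Wset n \<Longrightarrow> PhiW w \<in> Wset n"
  unfolding PhiW_def by (rule foldr_W)

lemma PhiW_Pos: "w \<in> Wset n \<Longrightarrow> Pos (PhiW w) = Pos w"
  unfolding PhiW_def by (rule foldr_Pos)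

lemma PhiW_DES: "w \<in> Wset n \<Longrightarrow> DESm 0 (PhiW w) = DES w"
  using foldr_DES[of w n n] Wset_length[of w n] unfolding PhiW_def by simp

lemma PhiW_inj: "inj_on PhiW (Wset n)"
proof (rule inj_onI)
  fix v w assume v: "v \<in> Wset n" and w: "w \<in> Wset n" and e: "PhiW v = PhiW w"
  have "foldr phi_l [1..<n + 1] v = foldr phi_l [1..<n + 1] w"
    using e Wset_length[OF v] Wset_length[OF w] unfolding PhiW_def by simp
  then show "v = w" using foldr_inj v w by (auto dest: inj_onD)
qed


declare swapblocks.simps[simp del] F3W.simps[simp del]

fun Zc :: "nat list \<Rightarrow> nat" where
  "Zc [] = 0"
| "Zc (x # xs) = (if 0 < x then nz xs else 0) + Zc xs"

lemma Zc_append: "Zc (xs @ ys) = Zc xs + Zc ys + npos xs * nz ys"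
  by (induction xs) auto

lemma zeros_facts: "\<forall>y\<in>set Z. y = 0 \<Longrightarrow> nz Z = length Z \<and> npos Z = 0 \<and> Zc Z = 0 \<and> Pos Z = []"
  by (induction Z) auto

lemma pos_facts: "\<forall>y\<in>set P. 0 < y \<Longrightarrow> nz P = 0 \<and> npos P = length P \<and> Zc P = 0 \<and> Pos P = P"
  by (induction P) auto

lemma Zero_pos_snoc: "Zero_pos (v @ [x]) = Zero_pos v \<union> (if x = 0 then {Suc (length v)} else {})"
proof -
  have "Zero_pos (v @ [x]) = {i. 1 \<le> i \<and> i \<le> Suc (length v) \<and> (v @ [x]) ! (i - 1) = 0}"
    by (simp add: Zero_pos_def)
  also have "\<dots> = {i. 1 \<le> i \<and> i \<le> length v \<and> v ! (i - 1) = 0} \<union> (if x = 0 then {Suc (length v)} else {})"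
    by (auto simp: nth_append le_Suc_eq)
  finally show ?thesis by (simp add: Zero_pos_def)
qed

lemma Zero_pos_sub: "Zero_pos v \<subseteq> {1..length v}"
  by (auto simp: Zero_pos_def)

lemma Zero_pos_facts: "card (Zero_pos v) = nz v \<and> \<Sum>(Zero_pos v) = \<Sum>{1..nz v} + Zc v"
proof (induction v rule: rev_induct)
  case Nil then show ?case by (simp add: Zero_pos_def)
next
  case (snoc x v)
  have fin: "finite (Zero_pos v)" using Zero_pos_sub finite_subset by blast
  have nin: "Suc (length v) \<notin> Zero_pos v" using Zero_pos_sub by fastforce
  show ?case
  proof (cases "x = 0")
    case True
    have "\<Sum>{1..Suc (nz v)} = \<Sum>{1..nz v} + Suc (nz v)" by simp
    then show ?thesis using snoc True fin nin npos_nz[of v]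
      by (simp add: Zero_pos_snoc Zc_append)
  next
    case False
    then show ?thesis using snoc by (simp add: Zero_pos_snoc Zc_append)
  qed
qed

lemma mafz_Zc: "mafz v = int (Zc v) + int (maj (Pos v))"
  using Zero_pos_facts[of v] unfolding mafz_def zero_cnt_def by simp

lemma DES_snoc: "DES (w @ [b]) = DES w \<union> (if w \<noteq> [] \<and> b < last w then {length w} else {})"
proof (rule set_eqI)
  fix i
  have "i \<in> DES (w @ [b]) \<longleftrightarrow> (1 \<le> i \<and> i < length w \<and> w ! i < w ! (i - 1)) \<or> (i = length w \<and> w \<noteq> [] \<and> b < last w)"
  proof (cases "i < length w")
    case True then show ?thesis unfolding DES_def by (auto simp: nth_append)
  next
    case False
    show ?thesis
    proof (cases "i = length w \<and> w \<noteq> []")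
      case True
      then have "(w @ [b]) ! i = b" "(w @ [b]) ! (i - 1) = last w"
        by (auto simp: nth_append last_conv_nth)
      then show ?thesis using True unfolding DES_def by (cases w) auto
    next
      case False
      then show ?thesis using \<open>\<not> i < length w\<close> unfolding DES_def by auto
    qed
  qed
  moreover have "i \<in> DES w \<longleftrightarrow> 1 \<le> i \<and> i < length w \<and> w ! i < w ! (i - 1)"
    unfolding DES_def by auto
  ultimately show "i \<in> DES (w @ [b]) \<longleftrightarrow> i \<in> DES w \<union> (if w \<noteq> [] \<and> b < last w then {length w} else {})"
    by auto
qed

lemma DES_sub: "DES w \<subseteq> {1..length w - 1}"
  by (auto simp: DES_def)

lemma maj_snoc: "maj (w @ [b]) = maj w + (if w \<noteq> [] \<and> b < last w then length w else 0)"
proof -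
  have fin: "finite (DES w)" using DES_sub finite_subset by blast
  have "length w \<notin> DES w" using DES_sub by fastforce
  then show ?thesis using fin by (simp add: maj_def DES_snoc)
qed

lemma maj_zeros_last: "\<forall>y\<in>set u. y = 0 \<Longrightarrow> maj (u @ [b]) = 0"
proof -
  assume z: "\<forall>y\<in>set u. y = 0"
  have "DES (u @ [b]) = {}"
  proof (rule ccontr)
    assume "DES (u @ [b]) \<noteq> {}"
    then obtain i where i: "1 \<le> i" "i \<le> length u" "(u @ [b]) ! i < (u @ [b]) ! (i - 1)"
      unfolding DES_def by auto
    have il: "i - 1 < length u" using i by simp
    have "(u @ [b]) ! (i - 1) = u ! (i - 1)" using il by (simp add: nth_append)
    moreover have "u ! (i - 1) = 0" using il z nth_mem by blast
    ultimately show False using i by simp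
  qed
  then show ?thesis by (simp add: maj_def)
qed

lemma SB_zeros: "\<forall>y\<in>set l. y = 0 \<Longrightarrow> swapblocks l = l"
  by (subst swapblocks.simps) (simp add: Let_def)

lemma SB_decomp: "\<exists>y\<in>set l. 0 < y \<Longrightarrow> \<exists>Z x P s. l = Z @ x # P @ s \<and> (\<forall>y\<in>set Z. y = 0) \<and> 0 < x \<and>
   (\<forall>y\<in>set P. 0 < y) \<and> (s = [] \<or> hd s = 0) \<and> length s < length l \<and> swapblocks l = x # Z @ P @ swapblocks s"
proof -
  assume ex: "\<exists>y\<in>set l. 0 < y"
  define Z where "Z = takeWhile (\<lambda>y. y = 0) l"
  define rest where "rest = dropWhile (\<lambda>y. y = 0) l"
  have rne: "rest \<noteq> []" using ex unfolding rest_def by (auto simp: dropWhile_eq_Nil_conv)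
  obtain x t where rt: "rest = x # t" using rne by (cases rest) auto
  have x0: "0 < x" using hd_dropWhile[of "\<lambda>y. y = 0" l] rne rt unfolding rest_def by simp
  define P where "P = takeWhile (\<lambda>y. 0 < y) t"
  define s where "s = dropWhile (\<lambda>y. 0 < y) t"
  have l: "l = Z @ x # P @ s"
  proof -
    have "l = Z @ rest" unfolding Z_def rest_def by simp
    moreover have "t = P @ s" unfolding P_def s_def by simp
    ultimately show ?thesis using rt by simp
  qed
  have Zs: "\<forall>y\<in>set Z. y = 0" unfolding Z_def by (auto dest: set_takeWhileD)
  have Ps: "\<forall>y\<in>set P. 0 < y" unfolding P_def by (auto dest: set_takeWhileD)
  have hs: "s = [] \<or> hd s = 0"
  proof (cases "s = []")
    case False then have "\<not> 0 < hd s" unfolding s_def by (rule hd_dropWhile)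
    then show ?thesis by simp
  qed simp
  have sb0: "swapblocks l = (let z = Z; rest = rest in if rest = [] then z
     else hd rest # z @ takeWhile (\<lambda>y. 0 < y) (tl rest) @ swapblocks (dropWhile (\<lambda>y. 0 < y) (tl rest)))"
    by (subst swapblocks.simps) (simp only: Z_def rest_def)
  have sb: "swapblocks l = x # Z @ P @ swapblocks s"
    unfolding sb0 Let_def using rt unfolding P_def s_def by simp
  have "length s < length l" using l by simp
  then show ?thesis using l Zs x0 Ps hs sb by blast
qed

lemma SB_len_Pos: "length (swapblocks l) = length l \<and> Pos (swapblocks l) = Pos l"
proof (induction "length l" arbitrary: l rule: less_induct)
  case less
  show ?case
  proof (cases "\<exists>y\<in>set l. 0 < y")
    case False then show ?thesis using SB_zeros by auto
  next
    case True
    obtain Z x P s where d: "l = Z @ x # P @ s" "\<forall>y\<in>set Z. y = 0" "0 < x" "\<forall>y\<in>set P. 0 < y"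
      "length s < length l" "swapblocks l = x # Z @ P @ swapblocks s"
      using SB_decomp[OF True] by blast
    have "length (swapblocks s) = length s \<and> Pos (swapblocks s) = Pos s" using less d(5) by blast
    then show ?thesis using d zeros_facts[OF d(2)] pos_facts[OF d(4)] by simp
  qed
qed

lemma SB_Zc: "l = [] \<or> 0 < last l \<Longrightarrow> Zc (swapblocks l) = Zc l + nz l"
proof (induction "length l" arbitrary: l rule: less_induct)
  case less
  show ?case
  proof (cases "l = []")
    case True then show ?thesis by (simp add: SB_zeros)
  next
    case False
    then have "\<exists>y\<in>set l. 0 < y" using less.prems by auto
    then obtain Z x P s where d: "l = Z @ x # P @ s" "\<forall>y\<in>set Z. y = 0" "0 < x" "\<forall>y\<in>set P. 0 < y"
      "length s < length l" "swapblocks l = x # Z @ P @ swapblocks s"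
      using SB_decomp by blast
    have "s = [] \<or> 0 < last s" using less.prems False d(1) by (cases "s = []") auto
    then have IH: "Zc (swapblocks s) = Zc s + nz s" using less d(5) by blast
    have ls: "length (swapblocks s) = length s" "Pos (swapblocks s) = Pos s" using SB_len_Pos by auto
    have "npos (swapblocks s) = npos s" using ls by (simp add: npos_def)
    moreover have "nz (swapblocks s) = nz s" using ls npos_nz[of s] npos_nz[of "swapblocks s"] by (simp add: npos_def)
    ultimately show ?thesis using d zeros_facts[OF d(2)] pos_facts[OF d(4)] IH
      by (simp add: Zc_append algebra_simps)
  qed
qed


lemma SB_hd: "\<exists>y\<in>set l. 0 < y \<Longrightarrow> swapblocks l \<noteq> [] \<and> 0 < hd (swapblocks l)"
  using SB_decomp[of l] by auto

lemma SB_shape: "s = [] \<or> (hd s = 0 \<and> 0 < last s) \<Longrightarrow>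
  swapblocks s = [] \<or> (0 < hd (swapblocks s) \<and> 2 \<le> length (swapblocks s) \<and> swapblocks s ! 1 = 0)"
proof -
  assume a: "s = [] \<or> (hd s = 0 \<and> 0 < last s)"
  show ?thesis
  proof (cases "s = []")
    case True then show ?thesis by (simp add: SB_zeros)
  next
    case False
    then have h: "hd s = 0" "0 < last s" using a by auto
    then have "\<exists>y\<in>set s. 0 < y" using False by auto
    then obtain Z x P s' where d: "s = Z @ x # P @ s'" "\<forall>y\<in>set Z. y = 0" "0 < x"
      "swapblocks s = x # Z @ P @ swapblocks s'"
      using SB_decomp by blast
    have "Z \<noteq> []" using d h by (cases Z) auto
    then have "hd Z = 0" using d(2) by (cases Z) auto
    then show ?thesis using d \<open>Z \<noteq> []\<close> by (cases Z) auto
  qed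
qed

lemma zeros_uniq: "(Z1 :: nat list) @ R1 = Z2 @ R2 \<Longrightarrow> \<forall>y\<in>set Z1. y = 0 \<Longrightarrow> \<forall>y\<in>set Z2. y = 0 \<Longrightarrow>
  R1 = [] \<or> 0 < hd R1 \<Longrightarrow> R2 = [] \<or> 0 < hd R2 \<Longrightarrow> Z1 = Z2 \<and> R1 = R2"
proof (induction Z1 arbitrary: Z2)
  case Nil
  then show ?case by (cases Z2) auto
next
  case (Cons z Z1)
  show ?case
  proof (cases Z2)
    case Nil then show ?thesis using Cons.prems by auto
  next
    case (Cons z' Z2')
    then show ?thesis using Cons.prems Cons.IH[of Z2'] by auto
  qed
qed

definition shapeT :: "nat list \<Rightarrow> bool" where
  "shapeT T \<longleftrightarrow> T = [] \<or> (0 < hd T \<and> 2 \<le> length T \<and> T ! 1 = 0)"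

lemma PT_aux: "(us :: nat list) @ T1 = T2 \<Longrightarrow> us \<noteq> [] \<Longrightarrow> \<forall>y\<in>set us. 0 < y \<Longrightarrow> shapeT T1 \<Longrightarrow> shapeT T2 \<Longrightarrow> False"
proof -
  assume a: "us @ T1 = T2" "us \<noteq> []" "\<forall>y\<in>set us. 0 < y" "shapeT T1" "shapeT T2"
  then have t2: "0 < hd T2" "2 \<le> length T2" "T2 ! 1 = 0" unfolding shapeT_def by auto
  show False
  proof (cases "2 \<le> length us")
    case True
    then have "T2 ! 1 = us ! 1" using a(1) by (auto simp: nth_append)
    moreover have "us ! 1 \<in> set us" using True by simp
    ultimately show False using a(3) t2 by auto
  next
    case False
    have l0: "0 < length us" using a(2) by simp
    have "length us < 2" using False by simp
    with l0 have "length us = 1" by linarith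
    then obtain u where "us = [u]" by (cases us) auto
    then have "T2 = u # T1" using a(1) by simp
    then have T1ne: "T1 \<noteq> []" using t2 by auto
    then have "hd T1 = T1 ! 0" by (simp add: hd_conv_nth)
    then have "T1 \<noteq> []" "hd T1 = 0" using t2 \<open>T2 = u # T1\<close> T1ne by auto
    then show False using a(4) unfolding shapeT_def by auto
  qed
qed

lemma PT_uniq: "(P1 :: nat list) @ T1 = P2 @ T2 \<Longrightarrow> \<forall>y\<in>set P1. 0 < y \<Longrightarrow> \<forall>y\<in>set P2. 0 < y \<Longrightarrow>
  shapeT T1 \<Longrightarrow> shapeT T2 \<Longrightarrow> P1 = P2 \<and> T1 = T2"
proof -
  assume e: "P1 @ T1 = P2 @ T2" and h: "\<forall>y\<in>set P1. 0 < y" "\<forall>y\<in>set P2. 0 < y" "shapeT T1" "shapeT T2"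
  from e obtain us where "P1 = P2 @ us \<and> us @ T1 = T2 \<or> P1 @ us = P2 \<and> T1 = us @ T2"
    unfolding append_eq_append_conv2 by blast
  then show ?thesis
  proof
    assume a: "P1 = P2 @ us \<and> us @ T1 = T2"
    show ?thesis
    proof (cases "us = []")
      case True then show ?thesis using a by simp
    next
      case False then show ?thesis using PT_aux[of us T1 T2] a h by auto
    qed
  next
    assume a: "P1 @ us = P2 \<and> T1 = us @ T2"
    show ?thesis
    proof (cases "us = []")
      case True then show ?thesis using a by simp
    next
      case False then show ?thesis using PT_aux[of us T2 T1] a h by auto
    qed
  qed
qed

lemma SB_inj: "l1 = [] \<or> 0 < last l1 \<Longrightarrow> l2 = [] \<or> 0 < last l2 \<Longrightarrow> swapblocks l1 = swapblocks l2 \<Longrightarrow> l1 = l2"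
proof (induction "length l1" arbitrary: l1 l2 rule: less_induct)
  case less
  have nil: "swapblocks l = [] \<longleftrightarrow> l = []" if "l = [] \<or> 0 < last l" for l
  proof (cases "l = []")
    case True then show ?thesis by (simp add: SB_zeros)
  next
    case False then have "\<exists>y\<in>set l. 0 < y" using that by auto
    then show ?thesis using SB_hd False by auto
  qed
  show ?case
  proof (cases "l1 = []")
    case True
    then have "swapblocks l2 = []" using less.prems(3) by (simp add: SB_zeros)
    then show ?thesis using nil[OF less.prems(2)] True by simp
  next
    case False
    have l2ne: "l2 \<noteq> []"
    proof
      assume "l2 = []"
      then have "swapblocks l1 = []" using less.prems(3) by (simp add: SB_zeros)
      then show False using nil[OF less.prems(1)] False by simp
    qed
    have e1: "\<exists>y\<in>set l1. 0 < y" using False less.prems(1) last_in_set by blast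
    have e2: "\<exists>y\<in>set l2. 0 < y" using l2ne less.prems(2) last_in_set by blast
    obtain Z1 x1 P1 s1 where d1: "l1 = Z1 @ x1 # P1 @ s1" "\<forall>y\<in>set Z1. y = 0" "0 < x1"
      "\<forall>y\<in>set P1. 0 < y" "s1 = [] \<or> hd s1 = 0" "length s1 < length l1" "swapblocks l1 = x1 # Z1 @ P1 @ swapblocks s1"
      using SB_decomp[OF e1] by blast
    obtain Z2 x2 P2 s2 where d2: "l2 = Z2 @ x2 # P2 @ s2" "\<forall>y\<in>set Z2. y = 0" "0 < x2"
      "\<forall>y\<in>set P2. 0 < y" "s2 = [] \<or> hd s2 = 0" "length s2 < length l2" "swapblocks l2 = x2 # Z2 @ P2 @ swapblocks s2"
      using SB_decomp[OF e2] by blast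
    have inv1: "s1 = [] \<or> (hd s1 = 0 \<and> 0 < last s1)"
    proof (cases "s1 = []")
      case f: False
      then have "last l1 = last s1" using d1(1) by simp
      then show ?thesis using f d1(5) less.prems(1) False by simp
    qed simp
    have inv2: "s2 = [] \<or> (hd s2 = 0 \<and> 0 < last s2)"
    proof (cases "s2 = []")
      case f: False
      then have "last l2 = last s2" using d2(1) by simp
      then show ?thesis using f d2(5) less.prems(2) l2ne by simp
    qed simp
    have sh1: "shapeT (swapblocks s1)" using SB_shape[OF inv1] unfolding shapeT_def by blast
    have sh2: "shapeT (swapblocks s2)" using SB_shape[OF inv2] unfolding shapeT_def by blast
    have hp: "P @ T = [] \<or> 0 < hd (P @ T)" if "\<forall>y\<in>set P. (0::nat) < y" "shapeT T" for P T
    proof (cases P)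
      case Nil then show ?thesis using that(2) unfolding shapeT_def by auto
    next
      case (Cons p P') then show ?thesis using that(1) by simp
    qed
    have "x1 # Z1 @ P1 @ swapblocks s1 = x2 # Z2 @ P2 @ swapblocks s2"
      unfolding d1(7)[symmetric] d2(7)[symmetric] by (rule less.prems(3))
    then have xx: "x1 = x2" and zz: "Z1 @ (P1 @ swapblocks s1) = Z2 @ (P2 @ swapblocks s2)" by simp_all
    have zu: "Z1 = Z2 \<and> P1 @ swapblocks s1 = P2 @ swapblocks s2"
      by (rule zeros_uniq[OF zz d1(2) d2(2) hp[OF d1(4) sh1] hp[OF d2(4) sh2]])
    have pu: "P1 = P2 \<and> swapblocks s1 = swapblocks s2"
      by (rule PT_uniq[OF conjunct2[OF zu] d1(4) d2(4) sh1 sh2])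
    have "s1 = s2"
      by (rule less.hyps[OF d1(6)]) (use inv1 inv2 pu in auto)
    then have "l1 = l2" unfolding d1(1) d2(1) using xx zu pu by simp
    then show ?thesis .
  qed
qed


lemma F3W_base: "length w \<le> 1 \<or> (\<forall>y\<in>set (butlast w). y = 0) \<Longrightarrow> F3W w = w"
  by (subst F3W.simps) simp

lemma Pos_filter: "filter (\<lambda>y. 0 < y) u = Pos u" by (simp add: Pos_def)

lemma F3W_rec: assumes "u \<noteq> []" "\<exists>y\<in>set u. 0 < y"
  shows "F3W (u @ [b]) = (if last (Pos u) \<le> b then F3W u @ [b]
     else if last u = 0 then 0 # butlast (F3W u) @ [b] else swapblocks (F3W u) @ [b])"
proof -
  have nb: "\<not> (length (u @ [b]) \<le> 1 \<or> (\<forall>y\<in>set u. y = 0))"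
    using assms by (cases u) auto
  have r: "(1 \<le> length (takeWhile (\<lambda>y. y = 0) (rev u))) = (last u = 0)"
    using assms(1) by (cases u rule: rev_cases) auto
  show ?thesis
    by (subst F3W.simps) (simp only: nb if_False Let_def butlast_snoc last_snoc Pos_filter r)
qed

lemma w_cases: fixes w :: "nat list" obtains (base) "length w \<le> 1 \<or> (\<forall>y\<in>set (butlast w). y = 0)"
  | (rec) u b where "w = u @ [b]" "u \<noteq> []" "\<exists>y\<in>set u. 0 < y"
proof (cases "length w \<le> 1 \<or> (\<forall>y\<in>set (butlast w). y = 0)")
  case True then show ?thesis using base by blast
next
  case False
  then obtain u b where w: "w = u @ [b]" by (cases w rule: rev_cases) auto
  then have "u \<noteq> []" using False by auto
  moreover obtain y where "y \<in> set u" "y \<noteq> 0" using False w by auto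
  ultimately have "\<exists>x\<in>set u. 0 < x" "u \<noteq> []" by auto
  then show ?thesis using rec[of u b] w by blast
qed

lemma last_Pos: "0 < last u \<Longrightarrow> u \<noteq> [] \<Longrightarrow> last (Pos u) = last u"
  by (cases u rule: rev_cases) auto

lemma F3_len_Pos: "length (F3W w) = length w \<and> Pos (F3W w) = Pos w \<and> (w \<noteq> [] \<longrightarrow> last (F3W w) = last w)"
proof (induction "length w" arbitrary: w rule: less_induct)
  case less
  show ?case
  proof (cases w rule: w_cases)
    case base then show ?thesis by (simp add: F3W_base)
  next
    case (rec u b)
    have IH: "length (F3W u) = length u \<and> Pos (F3W u) = Pos u \<and> last (F3W u) = last u"
      using less rec by simp
    show ?thesis
    proof (cases "last (Pos u) \<le> b")
      case True then show ?thesis using rec IH F3W_rec[OF rec(2,3)] by simp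
    next
      case nle: False
      show ?thesis
      proof (cases "last u = 0")
        case True
        have ne: "F3W u \<noteq> []" using IH rec(2) by auto
        then have fu: "F3W u = butlast (F3W u) @ [0]" using IH True by (metis append_butlast_last_id)
        have "Pos (butlast (F3W u)) = Pos u" using IH fu by (metis Pos_simps(1,2,3) append_Nil2 less_irrefl)
        then show ?thesis using rec IH F3W_rec[OF rec(2,3)] nle True ne by simp
      next
        case False
        then show ?thesis using rec IH F3W_rec[OF rec(2,3)] nle SB_len_Pos[of "F3W u"] by simp
      qed
    qed
  qed
qed

lemma maj_short: "length w \<le> 1 \<Longrightarrow> maj w = 0"
proof -
  assume "length w \<le> 1"
  then have "DES w = {}" by (auto simp: DES_def)
  then show ?thesis by (simp add: maj_def)
qed

lemma F3_Zc: "Zc (F3W w) + maj (Pos w) = maj w"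
proof (induction "length w" arbitrary: w rule: less_induct)
  case less
  show ?case
  proof (cases w rule: w_cases)
    case base
    show ?thesis
    proof (cases "length w \<le> 1")
      case True
      have "length (Pos w) \<le> 1" using True by (simp add: Pos_def) (metis le_trans length_filter_le)
      then show ?thesis using True by (simp add: F3W_base maj_short) (cases w, auto)
    next
      case False
      then obtain u b where w: "w = u @ [b]" by (cases w rule: rev_cases) auto
      then have z: "\<forall>y\<in>set u. y = 0" using base False by simp
      have "Pos w = Pos [b]" using w zeros_facts[OF z] by simp
      then have "maj (Pos w) = 0" by (simp add: maj_short)
      moreover have "Zc w = 0" using w zeros_facts[OF z] by (simp add: Zc_append)
      ultimately show ?thesis using base maj_zeros_last[OF z] w by (simp add: F3W_base)
    qed
  next
    case (rec u b)
    have IH: "Zc (F3W u) + maj (Pos u) = maj u" using less rec by simp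
    have LP: "length (F3W u) = length u \<and> Pos (F3W u) = Pos u \<and> last (F3W u) = last u"
      using F3_len_Pos[of u] rec by simp
    have Pne: "Pos u \<noteq> []" using rec(3) by (simp add: Pos_def filter_empty_conv)
    define a where "a = last (Pos u)"
    have apos: "0 < a" using Pne unfolding a_def by (metis Pos_def last_in_set mem_Collect_eq set_filter)
    have "0 < last u \<Longrightarrow> last u = a" using last_Pos[of u] rec(2) unfolding a_def by simp
    then have lu: "last u = 0 \<or> last u = a" by (cases "last u") auto
    have majw: "maj w = maj u + (if b < last u then length u else 0)" using rec maj_snoc by simp
    have majP: "maj (Pos w) = maj (Pos u) + (if 0 < b \<and> b < a then npos u else 0)"
    proof (cases "0 < b")
      case True
      have "Pos w = Pos u @ [b]" using rec True by simp
      then show ?thesis using maj_snoc[of "Pos u" b] Pne True unfolding a_def by (simp add: npos_def)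
    next
      case False then show ?thesis using rec by simp
    qed
    have nzu: "nz (F3W u) = nz u" using LP npos_nz[of u] npos_nz[of "F3W u"] by (simp add: npos_def)
    have npu: "npos (F3W u) = npos u" using LP by (simp add: npos_def)
    have lensum: "length u = npos u + nz u" using npos_nz[of u] by simp
    show ?thesis
    proof (cases "a \<le> b")
      case True
      then have "\<not> b < last u" using lu by auto
      then show ?thesis using True F3W_rec[OF rec(2,3)] IH majw majP apos rec(1)
        unfolding a_def by (simp add: Zc_append)
    next
      case nle: False
      show ?thesis
      proof (cases "last u = 0")
        case True
        have ne: "F3W u \<noteq> []" using LP rec(2) by auto
        define X where "X = butlast (F3W u)"
        have fu: "F3W u = X @ [0]" using LP True ne unfolding X_def by (metis append_butlast_last_id)
        have npX: "npos X = npos u" using npu fu by simp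
        have ZF: "Zc (F3W u) = Zc X + npos X" using fu by (simp add: Zc_append)
        have "F3W w = 0 # X @ [b]" using F3W_rec[OF rec(2,3)] nle True rec(1) unfolding a_def X_def by simp
        then have "Zc (F3W w) = Zc X + (if b = 0 then npos X else 0)" by (simp add: Zc_append)
        then show ?thesis using IH majw majP ZF npX True nle by auto
      next
        case False
        then have lua: "last u = a" using lu by simp
        have "F3W w = swapblocks (F3W u) @ [b]" using F3W_rec[OF rec(2,3)] nle False rec(1) unfolding a_def by simp
        moreover have "Zc (swapblocks (F3W u)) = Zc (F3W u) + nz (F3W u)"
          using SB_Zc[of "F3W u"] LP lua apos by simp
        moreover have "npos (swapblocks (F3W u)) = npos u" using SB_len_Pos[of "F3W u"] npu by (simp add: npos_def)
        ultimately have "Zc (F3W w) = Zc (F3W u) + nz u + (if b = 0 then npos u else 0)"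
          using nzu by (simp add: Zc_append)
        then show ?thesis using IH majw majP lua nle lensum by auto
      qed
    qed
  qed
qed

lemma Pos_ne: "Pos u \<noteq> [] \<longleftrightarrow> (\<exists>y\<in>set u. 0 < y)"
  by (induction u) auto

lemma Pos_nil: "Pos u = [] \<longleftrightarrow> (\<forall>y\<in>set u. y = 0)"
  by (induction u) auto

lemma F3_inj: "F3W w1 = F3W w2 \<Longrightarrow> w1 = w2"
proof (induction "length w1" arbitrary: w1 w2 rule: less_induct)
  case less
  have L1: "length (F3W w1) = length w1 \<and> Pos (F3W w1) = Pos w1 \<and> (w1 \<noteq> [] \<longrightarrow> last (F3W w1) = last w1)"
    by (rule F3_len_Pos)
  have L2: "length (F3W w2) = length w2 \<and> Pos (F3W w2) = Pos w2 \<and> (w2 \<noteq> [] \<longrightarrow> last (F3W w2) = last w2)"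
    by (rule F3_len_Pos)
  have len: "length w1 = length w2" using L1 L2 less.prems by metis
  have Peq: "Pos w1 = Pos w2" using L1 L2 less.prems by metis
  show ?case
  proof (cases "w1 = []")
    case True then show ?thesis using len by simp
  next
    case False
    then have w2ne: "w2 \<noteq> []" using len by auto
    obtain u1 b1 where w1: "w1 = u1 @ [b1]" using False by (cases w1 rule: rev_cases) auto
    obtain u2 b2 where w2: "w2 = u2 @ [b2]" using w2ne by (cases w2 rule: rev_cases) auto
    have "last (F3W w1) = b1" using L1 w1 by simp
    moreover have "last (F3W w2) = b2" using L2 w2 by simp
    ultimately have bb: "b1 = b2" using less.prems by simp
    have lu: "length u1 = length u2" using len w1 w2 by simp
    have Pu: "Pos u1 = Pos u2" using Peq w1 w2 bb by (cases "0 < b2") auto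
    have base_iff: "(\<forall>y\<in>set u. y = 0) \<longleftrightarrow> Pos u = []" for u :: "nat list"
      using Pos_nil[of u] by simp
    show ?thesis
    proof (cases "u1 = [] \<or> Pos u1 = []")
      case True
      then have "u2 = [] \<or> Pos u2 = []" using lu Pu by auto
      then have c2: "u2 = [] \<or> (\<forall>y\<in>set u2. y = 0)" using base_iff[of u2] by blast
      have c1: "u1 = [] \<or> (\<forall>y\<in>set u1. y = 0)" using True base_iff[of u1] by blast
      have "F3W w1 = w1" using c1 w1 by (intro F3W_base) auto
      moreover have "F3W w2 = w2" using c2 w2 by (intro F3W_base) auto
      ultimately show ?thesis using less.prems by metis
    next
      case False
      then have a1: "u1 \<noteq> []" "Pos u1 \<noteq> []" by simp_all
      have a2: "u2 \<noteq> []" using lu a1(1) by (cases u2) auto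
      have a2': "Pos u2 \<noteq> []" using Pu a1(2) by simp
      have ne1: "u1 \<noteq> []" "\<exists>y\<in>set u1. 0 < y" using a1 Pos_ne[THEN iffD1] by blast+
      have ne2: "u2 \<noteq> []" "\<exists>y\<in>set u2. 0 < y" using a2 a2' Pos_ne[THEN iffD1] by blast+
      note r1 = F3W_rec[OF ne1, of b1] and r2 = F3W_rec[OF ne2, of b2]
      have LP1: "length (F3W u1) = length u1 \<and> Pos (F3W u1) = Pos u1 \<and> last (F3W u1) = last u1"
        using F3_len_Pos[of u1] ne1 by simp
      have LP2: "length (F3W u2) = length u2 \<and> Pos (F3W u2) = Pos u2 \<and> last (F3W u2) = last u2"
        using F3_len_Pos[of u2] ne2 by simp
      have IH: "F3W u1 = F3W u2 \<Longrightarrow> u1 = u2" using less.hyps[of u1] w1 by simp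
      have eq: "F3W (u1 @ [b1]) = F3W (u2 @ [b1])" using less.prems w1 w2 bb by simp
      have hdsb: "swapblocks (F3W u) \<noteq> [] \<and> 0 < hd (swapblocks (F3W u))" if "\<exists>y\<in>set u. 0 < y" "Pos (F3W u) = Pos u" for u
      proof -
        have "Pos (F3W u) \<noteq> []" using that Pos_ne[of u] by simp
        then have "\<exists>y\<in>set (F3W u). 0 < y" using Pos_ne[of "F3W u"] by simp
        then show ?thesis by (rule SB_hd)
      qed
      show ?thesis
      proof (cases "last (Pos u1) \<le> b1")
        case True
        then have "F3W u1 @ [b1] = F3W u2 @ [b1]" using eq r1 r2 Pu bb by simp
        then show ?thesis using IH w1 w2 bb by simp
      next
        case nle: False
        then have nle2: "\<not> last (Pos u2) \<le> b1" using Pu by simp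
        have sb1: "last u1 \<noteq> 0 \<Longrightarrow> F3W (u1 @ [b1]) = swapblocks (F3W u1) @ [b1]" using r1 nle by simp
        have sb2: "last u2 \<noteq> 0 \<Longrightarrow> F3W (u2 @ [b1]) = swapblocks (F3W u2) @ [b1]" using r2 nle2 bb by simp
        have z1: "last u1 = 0 \<Longrightarrow> F3W (u1 @ [b1]) = 0 # butlast (F3W u1) @ [b1]" using r1 nle by simp
        have z2: "last u2 = 0 \<Longrightarrow> F3W (u2 @ [b1]) = 0 # butlast (F3W u2) @ [b1]" using r2 nle2 bb by simp
        have h1: "swapblocks (F3W u1) \<noteq> [] \<and> 0 < hd (swapblocks (F3W u1))" using hdsb[OF ne1(2)] LP1 by simp
        have h2: "swapblocks (F3W u2) \<noteq> [] \<and> 0 < hd (swapblocks (F3W u2))" using hdsb[OF ne2(2)] LP2 by simp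
        show ?thesis
        proof (cases "last u1 = 0"; cases "last u2 = 0")
          assume a: "last u1 = 0" "last u2 = 0"
          then have "butlast (F3W u1) = butlast (F3W u2)" using eq z1 z2 by simp
          moreover have "F3W u1 \<noteq> []" "F3W u2 \<noteq> []" using LP1 LP2 ne1 ne2 by auto
          ultimately have "F3W u1 = F3W u2" using LP1 LP2 a by (metis append_butlast_last_id)
          then show ?thesis using IH w1 w2 bb by simp
        next
          assume a: "last u1 = 0" "last u2 \<noteq> 0"
          then have "0 # butlast (F3W u1) @ [b1] = swapblocks (F3W u2) @ [b1]" using eq z1 sb2 by simp
          then show ?thesis using h2 by (cases "swapblocks (F3W u2)") auto
        next
          assume a: "last u1 \<noteq> 0" "last u2 = 0"
          then have "0 # butlast (F3W u2) @ [b1] = swapblocks (F3W u1) @ [b1]" using eq z2 sb1 by simp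
          then show ?thesis using h1 by (cases "swapblocks (F3W u1)") auto
        next
          assume a: "last u1 \<noteq> 0" "last u2 \<noteq> 0"
          then have "swapblocks (F3W u1) = swapblocks (F3W u2)" using eq sb1 sb2 by simp
          moreover have "F3W u1 = [] \<or> 0 < last (F3W u1)" using LP1 a by simp
          moreover have "F3W u2 = [] \<or> 0 < last (F3W u2)" using LP2 a by simp
          ultimately have "F3W u1 = F3W u2" using SB_inj[of "F3W u1" "F3W u2"] by simp
          then show ?thesis using IH w1 w2 bb by simp
        qed
      qed
    qed
  qed
qed

lemma Wset_finite: "finite (Wset n)"
proof -
  have "Wset n \<subseteq> {w. set w \<subseteq> {0..n} \<and> length w = n}"
  proof
    fix w assume w: "w \<in> Wset n"
    have "set w \<subseteq> {0..n}"
    proof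
      fix x assume x: "x \<in> set w"
      show "x \<in> {0..n}"
      proof (cases "x = 0")
        case False
        then have "x \<in> set (Pos w)" using x by (simp add: Pos_def)
        then have "x \<le> npos w" using w by (auto simp: Wset_def)
        moreover have "npos w \<le> n" using w npos_nz[of w] by (auto simp: Wset_def)
        ultimately show ?thesis by simp
      qed simp
    qed
    then show "w \<in> {w. set w \<subseteq> {0..n} \<and> length w = n}" using w by (simp add: Wset_def)
  qed
  moreover have "finite {w. set w \<subseteq> {0..n} \<and> length w = n}"
    by (rule finite_lists_length_eq) simp
  ultimately show ?thesis by (rule finite_subset)
qed

lemma F3W_W: "w \<in> Wset n \<Longrightarrow> F3W w \<in> Wset n"
  using F3_len_Pos[of w] Wset_cong[of w n "F3W w"] by simp

lemma bij_endo: "finite A \<Longrightarrow> (\<And>x. x \<in> A \<Longrightarrow> f x \<in> A) \<Longrightarrow> inj_on f A \<Longrightarrow> bij_betw f A A"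
  unfolding bij_betw_def using endo_inj_surj[of A f] by blast

lemma F3W_bij: "bij_betw F3W (Wset n) (Wset n)"
  by (rule bij_endo[OF Wset_finite F3W_W]) (auto intro: inj_onI F3_inj)

lemma PhiW_bij: "bij_betw PhiW (Wset n) (Wset n)"
  by (rule bij_endo[OF Wset_finite PhiW_W PhiW_inj])



definition rk :: "nat set \<Rightarrow> nat \<Rightarrow> nat" where "rk S j = card {k \<in> S. k \<le> j}"

lemma rk_less: "finite S \<Longrightarrow> a \<in> S \<Longrightarrow> b \<in> S \<Longrightarrow> a < b \<Longrightarrow> rk S a < rk S b"
proof -
  assume f: "finite S" and a: "a \<in> S" and b: "b \<in> S" and ab: "a < b"
  have sub: "{k \<in> S. k \<le> a} \<subseteq> {k \<in> S. k \<le> b}" using ab by auto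
  have "b \<notin> {k \<in> S. k \<le> a}" using ab by auto
  moreover have "b \<in> {k \<in> S. k \<le> b}" using b by auto
  ultimately have "{k \<in> S. k \<le> a} \<subset> {k \<in> S. k \<le> b}" using sub by blast
  moreover have "finite {k \<in> S. k \<le> b}" using f by simp
  ultimately show ?thesis unfolding rk_def by (rule psubset_card_mono[rotated])
qed

lemma rk_less_iff: "finite S \<Longrightarrow> a \<in> S \<Longrightarrow> b \<in> S \<Longrightarrow> rk S a < rk S b \<longleftrightarrow> a < b"
  by (metis less_asym linorder_neqE_nat rk_less)

lemma rk_inj: "finite S \<Longrightarrow> inj_on (rk S) S"
  by (rule inj_onI) (metis less_irrefl linorder_neqE_nat rk_less)

lemma rk_range: "finite S \<Longrightarrow> a \<in> S \<Longrightarrow> 1 \<le> rk S a \<and> rk S a \<le> card S"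
proof -
  assume f: "finite S" and a: "a \<in> S"
  have "a \<in> {k \<in> S. k \<le> a}" using a by simp
  then have "0 < card {k \<in> S. k \<le> a}" using f by (auto simp: card_gt_0_iff)
  moreover have "card {k \<in> S. k \<le> a} \<le> card S" using f by (intro card_mono) auto
  ultimately show ?thesis unfolding rk_def by simp
qed

lemma rk_image: "finite S \<Longrightarrow> rk S ` S = {1..card S}"
proof -
  assume f: "finite S"
  have "rk S ` S \<subseteq> {1..card S}" using rk_range[OF f] by auto
  moreover have "card (rk S ` S) = card {1..card S}" using card_image[OF rk_inj[OF f]] by simp
  ultimately show ?thesis using card_subset_eq by (metis finite_atLeastAtMost)
qed

lemma card_filter_idx: "card {i. 1 \<le> i \<and> i \<le> length w \<and> P (w ! (i - 1))} = length (filter P w)"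
proof -
  have "{i. 1 \<le> i \<and> i \<le> length w \<and> P (w ! (i - 1))} = Suc ` {i. i < length w \<and> P (w ! i)}"
  proof
    show "{i. 1 \<le> i \<and> i \<le> length w \<and> P (w ! (i - 1))} \<subseteq> Suc ` {i. i < length w \<and> P (w ! i)}"
    proof
      fix i assume i: "i \<in> {i. 1 \<le> i \<and> i \<le> length w \<and> P (w ! (i - 1))}"
      then have "i = Suc (i - 1)" "i - 1 \<in> {i. i < length w \<and> P (w ! i)}" by auto
      then show "i \<in> Suc ` {i. i < length w \<and> P (w ! i)}" by (rule image_eqI)
    qed
    show "Suc ` {i. i < length w \<and> P (w ! i)} \<subseteq> {i. 1 \<le> i \<and> i \<le> length w \<and> P (w ! (i - 1))}"
      by auto
  qed
  then show ?thesis by (simp add: card_image length_filter_conv_card)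
qed

definition NFw :: "nat list \<Rightarrow> nat set" where "NFw w = {i. 1 \<le> i \<and> i \<le> length w \<and> 0 < w ! (i - 1)}"

lemma NFw_finite: "finite (NFw w)" unfolding NFw_def by (rule finite_subset[of _ "{1..length w}"]) auto

lemma npos_take_rk: "k \<le> length w \<Longrightarrow> npos (take k w) = rk (NFw w) k"
proof -
  assume k: "k \<le> length w"
  have "npos (take k w) = card {i. 1 \<le> i \<and> i \<le> length (take k w) \<and> 0 < take k w ! (i - 1)}"
    unfolding card_filter_idx by (simp add: npos_def Pos_def)
  also have "length (take k w) = k" using k by simp
  also have "{i. 1 \<le> i \<and> i \<le> k \<and> 0 < take k w ! (i - 1)} = {j \<in> NFw w. j \<le> k}"
    using k by (auto simp: NFw_def)
  finally show ?thesis by (simp add: rk_def)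
qed

lemma npos_card: "npos w = card (NFw w)"
  using card_filter_idx[where P="\<lambda>x. 0 < x" and w=w] by (simp add: npos_def Pos_def NFw_def)

lemma ann_nth1: "1 \<le> i \<Longrightarrow> i \<le> length w \<Longrightarrow>
  ann w ! (i - 1) = (w ! (i - 1), if 0 < w ! (i - 1) then rk (NFw w) i else i - rk (NFw w) i)"
proof -
  assume i: "1 \<le> i" "i \<le> length w"
  have "ann w ! (i - 1) = (w ! (i - 1), if 0 < w ! (i - 1) then npos (take i w) else nz (take i w))"
    using annp_nth[of "i - 1" w 0 0] i by (simp add: ann_def)
  moreover have "nz (take i w) = i - npos (take i w)" using npos_nz[of "take i w"] i by simp
  ultimately show ?thesis using npos_take_rk[OF i(2)] by simp
qed

lemma ann_zero_pos: "e \<in> set (ann w) \<Longrightarrow> fst e = 0 \<Longrightarrow> 0 < snd e"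
  using annp_set_zero[of e 0 0 w] by (simp add: ann_def)

definition excnt :: "nat list \<Rightarrow> nat" where
  "excnt w = length (filter (\<lambda>e. snd e < fst e) (ann w))"

context
  fixes s :: "nat list" and n :: nat
  assumes sp: "s \<in> perms n"
begin

definition "ff i = s ! (i - 1)"
definition "NF = {i. 1 \<le> i \<and> i \<le> n \<and> ff i \<noteq> i}"
definition "gg i = (if ff i = i then 0 else rk NF (ff i))"

lemma s_len: "length s = n" using sp by (simp add: perms_def)

lemma ff_range: "1 \<le> i \<Longrightarrow> i \<le> n \<Longrightarrow> 1 \<le> ff i \<and> ff i \<le> n"
proof -
  assume "1 \<le> i" "i \<le> n"
  then have "s ! (i - 1) \<in> set s" using s_len by simp
  then show ?thesis using sp by (simp add: perms_def ff_def)
qed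

lemma ff_inj: "1 \<le> i \<Longrightarrow> i \<le> n \<Longrightarrow> 1 \<le> j \<Longrightarrow> j \<le> n \<Longrightarrow> ff i = ff j \<Longrightarrow> i = j"
proof -
  assume "1 \<le> i" "i \<le> n" "1 \<le> j" "j \<le> n" "ff i = ff j"
  moreover have "distinct s" using sp by (simp add: perms_def)
  ultimately have "i - 1 = j - 1" using s_len unfolding ff_def by (simp add: nth_eq_iff_index_eq)
  then show "i = j" using \<open>1 \<le> i\<close> \<open>1 \<le> j\<close> by simp
qed

lemma NF_fin: "finite NF" unfolding NF_def by (rule finite_subset[of _ "{1..n}"]) auto

lemma ff_NF: "i \<in> NF \<Longrightarrow> ff i \<in> NF"
proof -
  assume i: "i \<in> NF"
  then have r: "1 \<le> ff i \<and> ff i \<le> n" using ff_range unfolding NF_def by auto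
  have "ff (ff i) \<noteq> ff i"
  proof
    assume "ff (ff i) = ff i"
    then have "ff i = i" using ff_inj[of "ff i" i] r i unfolding NF_def by auto
    then show False using i unfolding NF_def by simp
  qed
  then show ?thesis using r unfolding NF_def by simp
qed

lemma ZDer_eq: "ZDer s = map gg [1..<n + 1]"
  unfolding ZDer_def Let_def gg_def NF_def rk_def ff_def using s_len by simp

lemma w_nth: "1 \<le> i \<Longrightarrow> i \<le> n \<Longrightarrow> ZDer s ! (i - 1) = gg i"
  unfolding ZDer_eq by (simp del: upt_Suc)

lemma w_len: "length (ZDer s) = n" unfolding ZDer_eq by simp

lemma gg_pos: "1 \<le> i \<Longrightarrow> i \<le> n \<Longrightarrow> 0 < gg i \<longleftrightarrow> i \<in> NF"
proof -
  assume i: "1 \<le> i" "i \<le> n"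
  show ?thesis
  proof (cases "i \<in> NF")
    case True
    then have "1 \<le> rk NF (ff i)" using rk_range[OF NF_fin ff_NF[OF True]] by simp
    then show ?thesis using True unfolding gg_def NF_def by auto
  next
    case False then show ?thesis using i unfolding gg_def NF_def by auto
  qed
qed

lemma NFw_eq: "NFw (ZDer s) = NF"
  using gg_pos w_nth w_len unfolding NFw_def by (auto simp: NF_def)

lemma ann_s: "1 \<le> i \<Longrightarrow> i \<le> n \<Longrightarrow> ann (ZDer s) ! (i - 1) = (gg i, if i \<in> NF then rk NF i else i - rk NF i)"
  using ann_nth1[of i "ZDer s"] w_len w_nth gg_pos NFw_eq by simp

lemma fix_eq: "fixp s = nz (ZDer s)"
proof -
  have "fixp s = card {i. 1 \<le> i \<and> i \<le> n \<and> ff i = i}" unfolding fixp_def ff_def using s_len by simp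
  also have "{i. 1 \<le> i \<and> i \<le> n \<and> ff i = i} = {i. 1 \<le> i \<and> i \<le> length (ZDer s) \<and> ZDer s ! (i - 1) = 0}"
  proof (rule Collect_cong)
    fix i
    show "(1 \<le> i \<and> i \<le> n \<and> ff i = i) = (1 \<le> i \<and> i \<le> length (ZDer s) \<and> ZDer s ! (i - 1) = 0)"
    proof (cases "1 \<le> i \<and> i \<le> n")
      case True
      then have "ZDer s ! (i - 1) = gg i" using w_nth by blast
      moreover have "(0 < gg i) = (i \<in> NF)" using gg_pos True by blast
      ultimately show ?thesis using True w_len unfolding NF_def by auto
    next
      case False then show ?thesis using w_len by auto
    qed
  qed
  finally show ?thesis using card_filter_idx[where P="\<lambda>x. x = 0" and w="ZDer s"] by (simp add: nz_def)
qed


lemma exc_eq: "exc s = excnt (ZDer s)"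
proof -
  have "exc s = card {i. 1 \<le> i \<and> i \<le> n \<and> i < ff i}" unfolding exc_def ff_def using s_len by simp
  also have "{i. 1 \<le> i \<and> i \<le> n \<and> i < ff i} =
      {i. 1 \<le> i \<and> i \<le> length (ann (ZDer s)) \<and> snd (ann (ZDer s) ! (i - 1)) < fst (ann (ZDer s) ! (i - 1))}"
  proof -
    have "i < ff i \<longleftrightarrow> snd (ann (ZDer s) ! (i - 1)) < fst (ann (ZDer s) ! (i - 1))" if i: "1 \<le> i" "i \<le> n" for i
    proof (cases "i \<in> NF")
      case True
      then show ?thesis using ann_s[OF i] rk_less_iff[OF NF_fin True ff_NF[OF True]] unfolding gg_def NF_def by auto
    next
      case False
      then show ?thesis using ann_s[OF i] i unfolding gg_def NF_def by auto
    qed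
    moreover have "length (ann (ZDer s)) = n" using w_len by (simp add: ann_def)
    ultimately show ?thesis by (intro Collect_cong) auto
  qed
  finally show ?thesis using card_filter_idx[where P="\<lambda>e. snd e < fst e" and w="ann (ZDer s)"] by (simp add: excnt_def)
qed


lemma zero_rank_pos: "1 \<le> i \<Longrightarrow> i \<le> n \<Longrightarrow> i \<notin> NF \<Longrightarrow> 0 < i - rk NF i"
proof -
  assume i: "1 \<le> i" "i \<le> n" "i \<notin> NF"
  have "ann (ZDer s) ! (i - 1) \<in> set (ann (ZDer s))" using i w_len by (simp add: ann_def)
  moreover have "ann (ZDer s) ! (i - 1) = (0, i - rk NF i)" using ann_s[OF i(1,2)] i unfolding gg_def NF_def by auto
  ultimately show ?thesis using ann_zero_pos by fastforce
qed

lemma dm_iff: "1 \<le> i \<Longrightarrow> Suc i \<le> n \<Longrightarrow> dm 0 (ann (ZDer s) ! (i - 1)) (ann (ZDer s) ! i) \<longleftrightarrow> ff (Suc i) < ff i"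
proof -
  assume i: "1 \<le> i" "Suc i \<le> n"
  have i2: "i \<le> n" "1 \<le> Suc i" using i by auto
  have ea: "ann (ZDer s) ! (i - 1) = (gg i, if i \<in> NF then rk NF i else i - rk NF i)" using ann_s[OF i(1) i2(1)] .
  have eb: "ann (ZDer s) ! i = (gg (Suc i), if Suc i \<in> NF then rk NF (Suc i) else Suc i - rk NF (Suc i))"
    using ann_s[OF i2(2) i(2)] by simp
  have ga: "0 < gg i \<longleftrightarrow> i \<in> NF" using gg_pos i i2 by blast
  have gb: "0 < gg (Suc i) \<longleftrightarrow> Suc i \<in> NF" using gg_pos i i2 by blast
  have neq: "ff i \<noteq> ff (Suc i)" using ff_inj[of i "Suc i"] i i2 by auto
  show ?thesis
  proof (cases "i \<in> NF"; cases "Suc i \<in> NF")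
    assume a: "i \<in> NF" "Suc i \<in> NF"
    have "gg i = rk NF (ff i)" "gg (Suc i) = rk NF (ff (Suc i))" using a unfolding gg_def NF_def by auto
    moreover have "0 < gg i" "0 < gg (Suc i)" using a ga gb by auto
    ultimately show ?thesis using ea eb rk_less_iff[OF NF_fin ff_NF[OF a(2)] ff_NF[OF a(1)]] by simp
  next
    assume a: "i \<in> NF" "Suc i \<notin> NF"
    have fb: "ff (Suc i) = Suc i" using a i unfolding NF_def by auto
    have "gg i = rk NF (ff i)" using a unfolding gg_def NF_def by auto
    moreover have "gg (Suc i) = 0" using a gb by auto
    moreover have "0 < gg i" using a ga by auto
    moreover have "0 < Suc i - rk NF (Suc i)" using zero_rank_pos[OF i2(2) i(2) a(2)] .
    moreover have "ff i \<noteq> i" using a unfolding NF_def by auto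
    ultimately show ?thesis using ea eb rk_less_iff[OF NF_fin a(1) ff_NF[OF a(1)]] fb neq a by auto
  next
    assume a: "i \<notin> NF" "Suc i \<in> NF"
    have fa: "ff i = i" using a i i2 unfolding NF_def by auto
    have "gg (Suc i) = rk NF (ff (Suc i))" using a unfolding gg_def NF_def by auto
    moreover have "gg i = 0" using a ga by auto
    moreover have "0 < gg (Suc i)" using a gb by auto
    moreover have "0 < i - rk NF i" using zero_rank_pos[OF i(1) i2(1) a(1)] .
    moreover have "ff (Suc i) \<noteq> Suc i" using a unfolding NF_def by auto
    ultimately show ?thesis using ea eb rk_less_iff[OF NF_fin ff_NF[OF a(2)] a(2)] fa neq a by auto
  next
    assume a: "i \<notin> NF" "Suc i \<notin> NF"
    have "ff i = i" "ff (Suc i) = Suc i" using a i i2 unfolding NF_def by auto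
    moreover have "gg i = 0" "gg (Suc i) = 0" using a ga gb by auto
    ultimately show ?thesis using ea eb by simp
  qed
qed

lemma DES_eq: "DES s = DESm 0 (ZDer s)"
proof -
  have "DESm 0 (ZDer s) = {i. 1 \<le> i \<and> i \<le> n - 1 \<and> dm 0 (ann (ZDer s) ! (i - 1)) (ann (ZDer s) ! i)}"
    unfolding DESm_def idx_def using w_len by (auto simp: nth_adjl ann_def)
  also have "\<dots> = {i. 1 \<le> i \<and> i \<le> n - 1 \<and> ff (Suc i) < ff i}"
    using dm_iff by (intro Collect_cong) auto
  also have "\<dots> = DES s" unfolding DES_def ff_def using s_len by simp
  finally show ?thesis by simp
qed

lemma gg_inj: "inj_on gg NF"
proof (rule inj_onI)
  fix i j assume i: "i \<in> NF" and j: "j \<in> NF" and e: "gg i = gg j"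
  have "rk NF (ff i) = rk NF (ff j)" using e i j unfolding gg_def NF_def by auto
  then have "ff i = ff j" using rk_inj[OF NF_fin] ff_NF[OF i] ff_NF[OF j] by (auto dest: inj_onD)
  then show "i = j" using ff_inj i j unfolding NF_def by auto
qed

lemma ff_image: "ff ` NF = NF"
proof (rule endo_inj_surj[OF NF_fin])
  show "ff ` NF \<subseteq> NF" using ff_NF by auto
  show "inj_on ff NF" by (rule inj_onI) (use ff_inj in \<open>auto simp: NF_def\<close>)
qed

lemma Pos_ZDer: "Pos (ZDer s) = map gg (filter (\<lambda>i. i \<in> NF) [1..<n + 1])"
proof -
  have "Pos (ZDer s) = map gg (filter (\<lambda>i. 0 < gg i) [1..<n + 1])"
    unfolding ZDer_eq Pos_def by (simp add: filter_map o_def)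
  also have "filter (\<lambda>i. 0 < gg i) [1..<n + 1] = filter (\<lambda>i. i \<in> NF) [1..<n + 1]"
    using gg_pos by (intro filter_cong) auto
  finally show ?thesis .
qed

lemma ZDer_W: "ZDer s \<in> Wset n"
proof -
  have setf: "set (filter (\<lambda>i. i \<in> NF) [1..<n + 1]) = NF" unfolding NF_def by auto
  have dist: "distinct (Pos (ZDer s))" unfolding Pos_ZDer using gg_inj setf by (simp add: distinct_map)
  have "set (Pos (ZDer s)) = gg ` NF" unfolding Pos_ZDer using setf by simp
  also have "\<dots> = rk NF ` (ff ` NF)" unfolding image_image using NF_def gg_def
    by (intro image_cong) (auto simp: NF_def gg_def)
  also have "\<dots> = {1..card NF}" using ff_image rk_image[OF NF_fin] by simp
  finally have setP: "set (Pos (ZDer s)) = {1..card NF}" .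
  have "npos (ZDer s) = card NF" using distinct_card[OF dist] setP by (simp add: npos_def)
  then have setP2: "set (Pos (ZDer s)) = {1..npos (ZDer s)}" using setP by simp
  have der: "derw (ZDer s)"
    unfolding derw_def
  proof (intro ballI impI)
    fix e assume e: "e \<in> set (ann (ZDer s))" and p: "0 < fst e"
    then obtain k where k: "k < n" "e = ann (ZDer s) ! k" using w_len by (auto simp: in_set_conv_nth ann_def)
    have i: "1 \<le> Suc k" "Suc k \<le> n" using k by auto
    have ee: "e = (gg (Suc k), if Suc k \<in> NF then rk NF (Suc k) else Suc k - rk NF (Suc k))"
      using ann_s[OF i] k by simp
    then have "Suc k \<in> NF" using p gg_pos[OF i] by simp
    then have "e = (rk NF (ff (Suc k)), rk NF (Suc k))" "ff (Suc k) \<noteq> Suc k"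
      using ee unfolding gg_def NF_def by auto
    moreover have "rk NF (ff (Suc k)) \<noteq> rk NF (Suc k)"
      using rk_inj[OF NF_fin] ff_NF[OF \<open>Suc k \<in> NF\<close>] \<open>Suc k \<in> NF\<close> calculation(2)
      by (auto dest: inj_onD)
    ultimately show "fst e \<noteq> snd e" by simp
  qed
  show ?thesis unfolding Wset_def using w_len dist setP2 der by simp
qed

lemma zchar: "1 \<le> i \<Longrightarrow> i \<le> n \<Longrightarrow>
  ZDer s ! (i - 1) = (if s ! (i - 1) = i then 0 else rk {j. 1 \<le> j \<and> j \<le> n \<and> s ! (j - 1) \<noteq> j} (s ! (i - 1)))"
  using w_nth unfolding gg_def NF_def ff_def by simp

lemma zpos: "1 \<le> i \<Longrightarrow> i \<le> n \<Longrightarrow> s ! (i - 1) \<noteq> i \<Longrightarrow>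
  s ! (i - 1) \<in> {j. 1 \<le> j \<and> j \<le> n \<and> s ! (j - 1) \<noteq> j} \<and> 0 < ZDer s ! (i - 1)"
proof -
  assume i: "1 \<le> i" "i \<le> n" "s ! (i - 1) \<noteq> i"
  then have "i \<in> NF" unfolding NF_def ff_def by simp
  then show ?thesis using ff_NF gg_pos[OF i(1,2)] w_nth[OF i(1,2)] unfolding NF_def ff_def by auto
qed

end


lemma excnt_Pos: "excnt w = length (filter (\<lambda>e. snd e < fst e) (zip (Pos w) [Suc 0..<Suc (npos w)]))"
proof -
  have "filter (\<lambda>e. snd e < fst e) (ann w) = filter (\<lambda>e. snd e < fst e) (filter (\<lambda>e. 0 < fst e) (ann w))"
    unfolding filter_filter by (rule filter_cong) auto
  then show ?thesis unfolding excnt_def by (simp add: ann_def filter_annp del: upt_Suc)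
qed

lemma ZDer_inj: "inj_on ZDer (perms n)"
proof (rule inj_onI)
  fix s1 s2 assume s1: "s1 \<in> perms n" and s2: "s2 \<in> perms n" and e: "ZDer s1 = ZDer s2"
  define N1 where "N1 = {j. 1 \<le> j \<and> j \<le> n \<and> s1 ! (j - 1) \<noteq> j}"
  define N2 where "N2 = {j. 1 \<le> j \<and> j \<le> n \<and> s2 ! (j - 1) \<noteq> j}"
  have p1: "1 \<le> j \<Longrightarrow> j \<le> n \<Longrightarrow> s1 ! (j - 1) \<noteq> j \<longleftrightarrow> 0 < ZDer s1 ! (j - 1)" for j
    using zchar[OF s1, of j] zpos[OF s1, of j] by auto
  have p2: "1 \<le> j \<Longrightarrow> j \<le> n \<Longrightarrow> s2 ! (j - 1) \<noteq> j \<longleftrightarrow> 0 < ZDer s2 ! (j - 1)" for j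
    using zchar[OF s2, of j] zpos[OF s2, of j] by auto
  have NN: "N1 = N2" unfolding N1_def N2_def using p1 p2 e by auto
  have fin: "finite N1" unfolding N1_def by (rule finite_subset[of _ "{1..n}"]) auto
  have eqi: "s1 ! (i - 1) = s2 ! (i - 1)" if i: "1 \<le> i" "i \<le> n" for i
  proof (cases "s1 ! (i - 1) = i")
    case True
    then have "s2 ! (i - 1) = i" using p1[OF i] p2[OF i] e by auto
    then show ?thesis using True by simp
  next
    case False
    then have F2: "s2 ! (i - 1) \<noteq> i" using p1[OF i] p2[OF i] e by auto
    have "rk N1 (s1 ! (i - 1)) = rk N2 (s2 ! (i - 1))"
      using zchar[OF s1 i] zchar[OF s2 i] e False F2 unfolding N1_def N2_def by simp
    moreover have "s1 ! (i - 1) \<in> N1" using zpos[OF s1 i False] unfolding N1_def by simp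
    moreover have "s2 ! (i - 1) \<in> N1" using zpos[OF s2 i F2] NN unfolding N2_def by simp
    ultimately show ?thesis using rk_inj[OF fin] NN by (auto dest: inj_onD)
  qed
  have l: "length s1 = n" "length s2 = n" using s1 s2 by (auto simp: perms_def)
  show "s1 = s2"
  proof (rule nth_equalityI)
    show "length s1 = length s2" using l by simp
    fix k assume "k < length s1"
    then show "s1 ! k = s2 ! k" using eqi[of "Suc k"] l by simp
  qed
qed

lemma Pos_map: "Pos w = map (\<lambda>i. w ! (i - 1)) (filter (\<lambda>i. 0 < w ! (i - 1)) [1..<length w + 1])"
proof -
  have e: "w = map (\<lambda>i. w ! (i - 1)) [1..<length w + 1]"
    by (rule nth_equalityI) (simp_all del: upt_Suc)
  have "Pos w = filter (\<lambda>x. 0 < x) (map (\<lambda>i. w ! (i - 1)) [1..<length w + 1])"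
    unfolding Pos_def by (subst e) (rule refl)
  then show ?thesis by (simp add: filter_map o_def)
qed

lemma ZDer_surj: "w \<in> Wset n \<Longrightarrow> w \<in> ZDer ` perms n"
proof -
  assume W: "w \<in> Wset n"
  have len: "length w = n" using W by (simp add: Wset_def)
  define N where "N = NFw w"
  have fin: "finite N" unfolding N_def by (rule NFw_finite)
  have Nsub: "N \<subseteq> {1..n}" unfolding N_def NFw_def using len by auto
  have rkimg: "rk N ` N = set (Pos w)"
    using rk_image[OF fin] W npos_card[of w] unfolding N_def by (simp add: Wset_def)
  have inPos: "i \<in> N \<Longrightarrow> w ! (i - 1) \<in> set (Pos w)" for i
    unfolding N_def NFw_def Pos_def by auto
  define h where "h i = (if 0 < w ! (i - 1) then inv_into N (rk N) (w ! (i - 1)) else i)" for i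
  have hN: "i \<in> N \<Longrightarrow> h i \<in> N \<and> rk N (h i) = w ! (i - 1)" for i
  proof -
    assume i: "i \<in> N"
    then have "w ! (i - 1) \<in> rk N ` N" using rkimg inPos by simp
    moreover have "0 < w ! (i - 1)" using i unfolding N_def NFw_def by simp
    ultimately show ?thesis unfolding h_def by (simp add: inv_into_into f_inv_into_f)
  qed
  have hnN: "1 \<le> i \<Longrightarrow> i \<le> n \<Longrightarrow> i \<notin> N \<Longrightarrow> h i = i" for i
    unfolding h_def N_def NFw_def using len by auto
  have der: "i \<in> N \<Longrightarrow> w ! (i - 1) \<noteq> rk N i" for i
  proof -
    assume i: "i \<in> N"
    then have i1: "1 \<le> i" "i \<le> length w" "0 < w ! (i - 1)" unfolding N_def NFw_def by auto
    have "ann w ! (i - 1) = (w ! (i - 1), rk N i)" using ann_nth1[OF i1(1,2)] i1(3) unfolding N_def by simp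
    moreover have "ann w ! (i - 1) \<in> set (ann w)" using i1 by (simp add: ann_def)
    ultimately show ?thesis using W i1(3) unfolding Wset_def derw_def by fastforce
  qed
  have hne: "i \<in> N \<Longrightarrow> h i \<noteq> i" for i using hN der by metis
  have vinj: "inj_on (\<lambda>i. w ! (i - 1)) N"
  proof -
    have "distinct (Pos w)" using W by (simp add: Wset_def)
    then have "inj_on (\<lambda>i. w ! (i - 1)) (set (filter (\<lambda>i. 0 < w ! (i - 1)) [1..<length w + 1]))"
      unfolding Pos_map[of w] by (simp add: distinct_map)
    moreover have "set (filter (\<lambda>i. 0 < w ! (i - 1)) [1..<length w + 1]) = N"
      unfolding N_def NFw_def by auto
    ultimately show ?thesis by simp
  qed
  have hinj: "inj_on h {1..n}"
  proof (rule inj_onI)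
    fix i j assume i: "i \<in> {1..n}" and j: "j \<in> {1..n}" and e: "h i = h j"
    show "i = j"
    proof (cases "i \<in> N"; cases "j \<in> N")
      assume a: "i \<in> N" "j \<in> N"
      then have "w ! (i - 1) = w ! (j - 1)" using hN e by metis
      then show ?thesis using vinj a by (auto dest: inj_onD)
    next
      assume a: "i \<in> N" "j \<notin> N"
      then show ?thesis using hN[OF a(1)] hnN[of j] j e by auto
    next
      assume a: "i \<notin> N" "j \<in> N"
      then show ?thesis using hN[OF a(2)] hnN[of i] i e by auto
    next
      assume a: "i \<notin> N" "j \<notin> N"
      then show ?thesis using hnN i j e by auto
    qed
  qed
  have hrange: "h ` {1..n} \<subseteq> {1..n}"
  proof
    fix y assume "y \<in> h ` {1..n}"
    then obtain i where i: "i \<in> {1..n}" "y = h i" by blast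
    show "y \<in> {1..n}"
    proof (cases "i \<in> N")
      case True then have "h i \<in> N" using hN by blast
      then show ?thesis using i Nsub by blast
    next
      case False then show ?thesis using hnN[of i] i by auto
    qed
  qed
  have himg: "h ` {1..n} = {1..n}" by (rule endo_inj_surj[OF _ hrange hinj]) simp
  define s where "s = map h [1..<n + 1]"
  have sl: "length s = n" unfolding s_def by simp
  have snth: "1 \<le> i \<Longrightarrow> i \<le> n \<Longrightarrow> s ! (i - 1) = h i" for i unfolding s_def by (simp del: upt_Suc)
  have sp: "s \<in> perms n"
  proof -
    have su: "set [1..<n + 1] = {1..n}" by auto
    have "distinct s" unfolding s_def distinct_map using hinj su by (simp del: upt_Suc)
    moreover have "set s = {1..n}" unfolding s_def using himg su by (simp del: upt_Suc)
    ultimately show ?thesis using sl by (simp add: perms_def)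
  qed
  have Ns: "{j. 1 \<le> j \<and> j \<le> n \<and> s ! (j - 1) \<noteq> j} = N"
  proof (rule set_eqI)
    fix x show "x \<in> {j. 1 \<le> j \<and> j \<le> n \<and> s ! (j - 1) \<noteq> j} \<longleftrightarrow> x \<in> N"
    proof
      assume "x \<in> {j. 1 \<le> j \<and> j \<le> n \<and> s ! (j - 1) \<noteq> j}"
      then have x: "1 \<le> x" "x \<le> n" "h x \<noteq> x" using snth by auto
      then show "x \<in> N" using hnN by blast
    next
      assume x: "x \<in> N"
      then have x1: "1 \<le> x" "x \<le> n" using Nsub by auto
      then show "x \<in> {j. 1 \<le> j \<and> j \<le> n \<and> s ! (j - 1) \<noteq> j}" using snth[OF x1] hne[OF x] by simp
    qed
  qed
  have "ZDer s = w"
  proof (rule nth_equalityI)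
    show "length (ZDer s) = length w" using w_len[OF sp] len by simp
    fix k assume k: "k < length (ZDer s)"
    then have i: "1 \<le> Suc k" "Suc k \<le> n" using w_len[OF sp] by auto
    have z: "ZDer s ! k = (if h (Suc k) = Suc k then 0 else rk N (h (Suc k)))"
      using zchar[OF sp i] snth[OF i] Ns by simp
    show "ZDer s ! k = w ! k"
    proof (cases "Suc k \<in> N")
      case True then show ?thesis using z hN hne by simp
    next
      case False
      then have "w ! k = 0" using i len unfolding N_def NFw_def by auto
      then show ?thesis using z hnN[OF i False] by simp
    qed
  qed
  then show ?thesis using sp by blast
qed

lemma ZDer_bij: "bij_betw ZDer (perms n) (Wset n)"
  unfolding bij_betw_def using ZDer_inj ZDer_W ZDer_surj by blast


lemma nz_from: "length v = length w \<Longrightarrow> Pos v = Pos w \<Longrightarrow> nz v = nz w"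
proof -
  assume a: "length v = length w" "Pos v = Pos w"
  then have "npos v = npos w" by (simp add: npos_def)
  then show ?thesis using npos_nz[of v] npos_nz[of w] a(1) by linarith
qed

lemma excnt_cong: "Pos v = Pos w \<Longrightarrow> excnt v = excnt w"
  by (simp add: excnt_Pos npos_def)

lemma ZDer_inv_eq: "w \<in> Wset n \<Longrightarrow> ZDer_inv w = inv_into (perms n) ZDer w"
  by (simp add: ZDer_inv_def Wset_length)

lemma ZDer_inv_props: "w \<in> Wset n \<Longrightarrow> ZDer_inv w \<in> perms n \<and> ZDer (ZDer_inv w) = w"
proof -
  assume w: "w \<in> Wset n"
  have "w \<in> ZDer ` perms n" using ZDer_bij[of n] w by (simp add: bij_betw_def)
  then show ?thesis using ZDer_inv_eq[OF w] by (simp add: inv_into_into f_inv_into_f)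
qed

lemma ZDer_inv_bij: "bij_betw ZDer_inv (Wset n) (perms n)"
proof -
  have "bij_betw (inv_into (perms n) ZDer) (Wset n) (perms n)" by (rule bij_betw_inv_into[OF ZDer_bij])
  moreover have "\<And>w. w \<in> Wset n \<Longrightarrow> ZDer_inv w = inv_into (perms n) ZDer w" by (rule ZDer_inv_eq)
  ultimately show ?thesis using bij_betw_cong[of "Wset n" ZDer_inv "inv_into (perms n) ZDer" "perms n"] by blast
qed

theorem mainTheorem5:
  fixes n :: nat
  shows "bij_betw Phi (perms n) (perms n) \<and> bij_betw F3 (perms n) (perms n) \<and>
    (\<forall>\<sigma>\<in>perms n.
       fixp \<sigma> = fixp (Phi \<sigma>) \<and> DEZ \<sigma> = DES (Phi \<sigma>) \<and> exc \<sigma> = exc (Phi \<sigma>) \<and>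
       dez \<sigma> = des (Phi \<sigma>) \<and> maz \<sigma> = maj (Phi \<sigma>) \<and>
       fixp \<sigma> = fixp (F3 \<sigma>) \<and> int (maz \<sigma>) = maf (F3 \<sigma>) \<and> exc \<sigma> = exc (F3 \<sigma>))"
proof (intro conjI ballI)
  have "bij_betw (ZDer_inv \<circ> (PhiW \<circ> ZDer)) (perms n) (perms n)"
    by (rule bij_betw_trans[OF bij_betw_trans[OF ZDer_bij PhiW_bij] ZDer_inv_bij])
  moreover have "Phi = ZDer_inv \<circ> (PhiW \<circ> ZDer)" by (rule ext) (simp only: Phi_def comp_def)
  ultimately show "bij_betw Phi (perms n) (perms n)" by simp
  have "bij_betw (ZDer_inv \<circ> (F3W \<circ> ZDer)) (perms n) (perms n)"
    by (rule bij_betw_trans[OF bij_betw_trans[OF ZDer_bij F3W_bij] ZDer_inv_bij])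
  moreover have "F3 = ZDer_inv \<circ> (F3W \<circ> ZDer)" by (rule ext) (simp only: F3_def comp_def)
  ultimately show "bij_betw F3 (perms n) (perms n)" by simp
next
  fix \<sigma> assume s: "\<sigma> \<in> perms n"
  define w where "w = ZDer \<sigma>"
  have wW: "w \<in> Wset n" unfolding w_def by (rule ZDer_W[OF s])
  define v where "v = PhiW w"
  have vW: "v \<in> Wset n" unfolding v_def by (rule PhiW_W[OF wW])
  have t: "Phi \<sigma> \<in> perms n" "ZDer (Phi \<sigma>) = v"
    using ZDer_inv_props[OF vW] unfolding Phi_def v_def w_def by auto
  have vP: "Pos v = Pos w" "length v = length w" using PhiW_Pos[OF wW] vW wW unfolding v_def
    by (auto simp: Wset_length)
  define v' where "v' = F3W w"
  have v'W: "v' \<in> Wset n" unfolding v'_def by (rule F3W_W[OF wW])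
  have t': "F3 \<sigma> \<in> perms n" "ZDer (F3 \<sigma>) = v'"
    using ZDer_inv_props[OF v'W] unfolding F3_def v'_def w_def by auto
  have v'P: "Pos v' = Pos w" "length v' = length w" using F3_len_Pos[of w] unfolding v'_def by auto
  have DEZe: "DEZ \<sigma> = DES (Phi \<sigma>)"
    unfolding DEZ_def DES_eq[OF t(1)] t(2) v_def using PhiW_DES[OF wW] w_def by simp
  show "fixp \<sigma> = fixp (Phi \<sigma>)"
    using fix_eq[OF s] fix_eq[OF t(1)] t(2) nz_from[OF vP(2,1)] w_def by simp
  show "DEZ \<sigma> = DES (Phi \<sigma>)" by (rule DEZe)
  show "exc \<sigma> = exc (Phi \<sigma>)"
    using exc_eq[OF s] exc_eq[OF t(1)] t(2) excnt_cong[OF vP(1)] w_def by simp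
  show "dez \<sigma> = des (Phi \<sigma>)" unfolding dez_def des_def DEZe ..
  show "maz \<sigma> = maj (Phi \<sigma>)" using DEZe unfolding maz_def maj_def DEZ_def by simp
  show "fixp \<sigma> = fixp (F3 \<sigma>)"
    using fix_eq[OF s] fix_eq[OF t'(1)] t'(2) nz_from[OF v'P(2,1)] w_def by simp
  show "int (maz \<sigma>) = maf (F3 \<sigma>)"
    using F3_Zc[of w] t'(2) v'P(1) unfolding maf_def maz_def mafz_Zc v'_def w_def by simp
  show "exc \<sigma> = exc (F3 \<sigma>)"
    using exc_eq[OF s] exc_eq[OF t'(1)] t'(2) excnt_cong[OF v'P(1)] w_def by simp
qed


end
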